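(* Let the sequences be generated by Algorithm iMBA and suppose Assumptions 2, 3 and 4 hold. Let $\varpi^*:=\lim_{k\to\infty}F(x^k)$ (which exists). Then every cluster point of $\{x^k\}$ is a stationary point of (P), i.e. $\omega(x^0)\subset\Gamma^*$, and $F(x)=\varpi^*$ for all $x\in\omega(x^0)$.
   Context: Problem (P): $\min_{x\in\mathbb{R}^n}F(x):=g_0(x)+\delta_{\mathbb{R}^m_-}(g(x))+\phi(x)$, where $g=(g_1,\dots,g_m)^\top$ and $\delta_{\mathbb{R}^m_-}$ is the indicator of the nonpositive orthant. Assumption 1 (standing): (i) $g_0:\mathbb{R}^n\to(-\infty,\infty]$ is locally Lipschitz and upper-$\mathcal C^2$ at every point of an open convex set $\mathcal O\supset\Gamma:=\{x:g(x)\in\mathbb{R}^m_-\}\neq\emptyset$, and each $g_i:\mathbb{R}^n\to\mathbb{R}$, $i\in[m]$, is locally Lipschitz and upper-$\mathcal C^2$ at every point of $\mathbb{R}^n$; (ii) $\phi:\mathbb{R}^n\to\mathbb{R}$ is convex and $F$ is bounded below on $\Gamma$. $\partial$ denotes the limiting subdifferential; $\partial g(x):=\{V\in\mathbb{R}^{n\times m}: V_i\in\partial g_i(x)\ \forall i\}$. A point $x\in\Gamma$ is stationary for (P) if $0\in\partial g_0(x)+\partial\phi(x)+\bigcup_{\zeta\in\mathcal N_{\mathbb{R}^m_-}(g(x))}\sum_{i=1}^m\zeta_i\partial g_i(x)$; $\Gamma^*$ is the set of stationary points. Define $G(x,s,V,L):=g(s)+V^\top(x-s)+\tfrac12\|x-s\|^2L$.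 Algorithm iMBA (parameters $0<\mu_{\min}\le\mu_{\max}$, $0<L_{\min}\le L_{\max}$, $M,\beta_C,\beta_S,\alpha>0$, $\tau>1$, $x^0\in\Gamma$): at iteration $k$ choose $\xi^k\in\partial g_0(x^k)$, $V^k\in\partial g(x^k)$, $\mu_{k,0}\in[\mu_{\min},\mu_{\max}]$, $L^{k,0}\in[L_{\min},L_{\max}]^m$; for $j=0,1,\dots$ choose self-adjoint $\mathcal Q_{k,j}$ with $\mu_{k,j}\mathcal I\preceq\mathcal Q_{k,j}\preceq(\mu_{k,j}+M)\mathcal I$, let $F_{k,j}(x):=g_0(x^k)+\langle\xi^k,x-x^k\rangle+\frac12\langle x-x^k,\mathcal Q_{k,j}(x-x^k)\rangle+\phi(x)$, $\Gamma_{k,j}:=\{x:G(x,x^k,V^k,L^{k,j})\in\mathbb{R}^m_-\}$, $\overline x^{k,j}$ the unique minimizer of $F_{k,j}$ on $\Gamma_{k,j}$, and compute $y^{k,j}$, $v^{k,j}\in\partial\phi(y^{k,j})$, $\lambda^{k,j}\in\mathbb{R}^m_+$ with $F_{k,j}(y^{k,j})\le F_{k,j}(x^k)$, $(-\langle\lambda^{k,j},G(y^{k,j},x^k,V^k,L^{k,j})\rangle)_++\|[G(y^{k,j},x^k,V^k,L^{k,j})]_+\|_\infty\le\frac{\beta_C}2\|y^{k,j}-x^k\|^2$ and $\|\xi^k+\mathcal Q_{k,j}(y^{k,j}-x^k)+v^{k,j}+V^k\lambda^{k,j}+\langle L^{k,j},\lambda^{k,j}\rangle(y^{k,j}-x^k)\|\le\beta_S\|y^{k,j}-x^k\|$.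 If $g(y^{k,j})\in\mathbb{R}^m_-$ and $F(y^{k,j})\le F(x^k)-\frac\alpha2\|y^{k,j}-x^k\|^2$, accept ($j_k:=j$); else if $g(y^{k,j})\notin\mathbb{R}^m_-$ set $L^{k,j+1}=\tau L^{k,j}$, $\mu_{k,j+1}=\mu_{k,j}$; else $L^{k,j+1}=L^{k,j}$, $\mu_{k,j+1}=\tau\mu_{k,j}$. Then $x^{k+1}:=y^{k,j_k}$, $(\mu_k,\mathcal Q_k,L^k,v^{k+1},\lambda^{k+1}):=(\mu_{k,j_k},\mathcal Q_{k,j_k},L^{k,j_k},v^{k,j_k},\lambda^{k,j_k})$, $\overline x^k:=\overline x^{k,j_k}$. Assumption 2: for each $k,j$, the multifunction $x\mapsto G(x,x^k,V^k,L^{k,j})-\mathbb{R}^m_-$ is metrically subregular at $(\overline x^{k,j},0)$. Assumption 3: $\{x^k\}$ is bounded; $\omega(x^0)$ denotes its set of cluster points. Parametric data: $\mathbb U:=\mathbb{R}^n\times\mathbb{R}^m_+\times\mathbb{R}^{n\times m}\times\mathbb{R}^n\times\mathbb S_+$ ($\mathbb S_+$ = positive semidefinite self-adjoint linear maps on $\mathbb{R}^n$); for $u=(s,L,V,\xi,\mathcal Q)$: $H(u,x):=G(x,s,V,L)$, so $\nabla_xH(u,x)\lambda=V\lambda+\langle L,\lambda\rangle(x-s)$; $\mathcal S(u):=\{x:H(u,x)\in\mathbb{R}^m_-\}$; $\Lambda(u,x,y):=\{\lambda\in\mathcal N_{\mathbb{R}^m_-}(H(u,x)):\nabla_xH(u,x)\lambda=y\}$.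 The partial bounded multiplier property (BMP) w.r.t. $x$ holds at $(u^*,x^* )$ with $x^*\in\mathcal S(u^* )$ if there exist $\kappa>0$ and a neighborhood $\mathcal U\times\mathcal V$ of $(u^*,x^* )$ such that for all $u\in\mathcal U$, $x\in\mathcal V\cap\mathcal S(u)$ and $y\in\mathcal N_{\mathcal S(u)}(x)$, $\Lambda(u,x,y)\cap\{\lambda:\|\lambda\|\le\kappa\|y\|\}\neq\emptyset$. Let $u^k:=(x^k,L^k,V^k,\xi^k,\mathcal Q_k)$. Assumption 4: the partial BMP w.r.t. $x$ holds at every cluster point of $\{(u^k,\overline x^k)\}_{k\in\mathbb{N}}$. *)

theory Defs
  imports "HOL-Analysis.Analysis"
begin

definition frechet_subdiff :: "('a::real_inner \<Rightarrow> real) \<Rightarrow> 'a \<Rightarrow> 'a set" where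
  "frechet_subdiff f x =
     {v. \<forall>\<epsilon>>0. \<exists>\<delta>>0. \<forall>y. norm (y - x) < \<delta> \<longrightarrow>
            f x + v \<bullet> (y - x) - \<epsilon> * norm (y - x) \<le> f y}"

definition limiting_subdiff :: "('a::real_inner \<Rightarrow> real) \<Rightarrow> 'a \<Rightarrow> 'a set" where
  "limiting_subdiff f x =
     {v. \<exists>xs vs. xs \<longlonglongrightarrow> x \<and> (\<lambda>k. f (xs k)) \<longlonglongrightarrow> f x \<and>
                 (\<forall>k. vs k \<in> frechet_subdiff f (xs k)) \<and> vs \<longlonglongrightarrow> v}"

definition regular_normal_cone :: "'a::real_inner set \<Rightarrow> 'a \<Rightarrow> 'a set" where
  "regular_normal_cone C x =
     (if x \<in> C then {v. \<forall>\<epsilon>>0. \<exists>\<delta>>0. \<forall>y\<in>C. norm (y - x) < \<delta> \<longrightarrow>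
                          v \<bullet> (y - x) \<le> \<epsilon> * norm (y - x)}
      else {})"

definition normal_cone :: "'a::real_inner set \<Rightarrow> 'a \<Rightarrow> 'a set" where
  "normal_cone C x =
     (if x \<in> C then {v. \<exists>xs vs. (\<forall>k. xs k \<in> C \<and> vs k \<in> regular_normal_cone C (xs k)) \<and>
                              xs \<longlonglongrightarrow> x \<and> vs \<longlonglongrightarrow> v}
      else {})"

definition nonpos_orthant :: "(real^'m::finite) set" where
  "nonpos_orthant = {z. \<forall>i. z $ i \<le> 0}"

definition loc_lipschitz_at :: "('a::metric_space \<Rightarrow> real) \<Rightarrow> 'a \<Rightarrow> bool" where
  "loc_lipschitz_at f x = (\<exists>\<delta>>0. \<exists>K. lipschitz_on K (ball x \<delta>) f)"

text \<open>Upper-C2 at a point (semiconcavity characterisation, cf. Rockafellar--Wets Thm 10.33):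
  on a neighbourhood of x, f minus a multiple of the squared norm is concave.\<close>
definition upper_C2_at :: "('a::real_normed_vector \<Rightarrow> real) \<Rightarrow> 'a \<Rightarrow> bool" where
  "upper_C2_at f x = (\<exists>\<delta>>0. \<exists>\<rho>\<ge>0. convex_on (ball x \<delta>) (\<lambda>y. \<rho> / 2 * (norm y)\<^sup>2 - f y))"

definition metric_subregular :: "('a::metric_space \<Rightarrow> 'b::metric_space set) \<Rightarrow> 'a \<Rightarrow> 'b \<Rightarrow> bool" where
  "metric_subregular \<Phi> xb yb =
     (yb \<in> \<Phi> xb \<and> (\<exists>\<kappa>>0. \<exists>\<delta>>0. \<forall>x\<in>ball xb \<delta>. infdist x {z. yb \<in> \<Phi> z} \<le> \<kappa> * infdist yb (\<Phi> x)))"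

definition cluster_point :: "(nat \<Rightarrow> 'a::topological_space) \<Rightarrow> 'a \<Rightarrow> bool" where
  "cluster_point z p = (\<exists>r. strict_mono r \<and> (z \<circ> r) \<longlonglongrightarrow> p)"

definition feasible :: "(real^'n \<Rightarrow> real^'m::finite) \<Rightarrow> (real^'n) set" where
  "feasible g = {x. g x \<in> nonpos_orthant}"

definition Fobj :: "(real^'n \<Rightarrow> real) \<Rightarrow> (real^'n \<Rightarrow> real^'m::finite) \<Rightarrow> (real^'n \<Rightarrow> real) \<Rightarrow> real^'n \<Rightarrow> ereal" where
  "Fobj g0 g \<phi> x = (if g x \<in> nonpos_orthant then ereal (g0 x + \<phi> x) else \<infinity>)"

definition subdiff_vec :: "(real^'n \<Rightarrow> real^'m::finite) \<Rightarrow> real^'n \<Rightarrow> (real^'m^'n) set" where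
  "subdiff_vec g x = {V. \<forall>i. column i V \<in> limiting_subdiff (\<lambda>z. g z $ i) x}"

definition stationary :: "(real^'n \<Rightarrow> real) \<Rightarrow> (real^'n \<Rightarrow> real^'m::finite) \<Rightarrow> (real^'n \<Rightarrow> real) \<Rightarrow> real^'n \<Rightarrow> bool" where
  "stationary g0 g \<phi> x =
     (x \<in> feasible g \<and>
      (\<exists>\<xi>\<in>limiting_subdiff g0 x. \<exists>v\<in>limiting_subdiff \<phi> x. \<exists>\<zeta>\<in>normal_cone nonpos_orthant (g x).
         \<exists>w. (\<forall>i. w i \<in> limiting_subdiff (\<lambda>z. g z $ i) x) \<and>
             \<xi> + v + (\<Sum>i\<in>UNIV. \<zeta> $ i *\<^sub>R w i) = 0))"

definition Gfun :: "(real^'n \<Rightarrow> real^'m::finite) \<Rightarrow> real^'n \<Rightarrow> real^'n \<Rightarrow> real^'m^'n \<Rightarrow> real^'m \<Rightarrow> real^'m" where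
  "Gfun g x s V L = g s + transpose V *v (x - s) + ((norm (x - s))\<^sup>2 / 2) *\<^sub>R L"

definition Fmodel :: "(real^'n \<Rightarrow> real) \<Rightarrow> (real^'n \<Rightarrow> real) \<Rightarrow> real^'n \<Rightarrow> real^'n \<Rightarrow> real^'n^'n \<Rightarrow> real^'n \<Rightarrow> real" where
  "Fmodel g0 \<phi> xk \<xi> Q x = g0 xk + \<xi> \<bullet> (x - xk) + 1/2 * ((x - xk) \<bullet> (Q *v (x - xk))) + \<phi> x"

type_synonym ('n, 'm) param = "(real^'n) \<times> (real^'m) \<times> (real^'m^'n) \<times> (real^'n) \<times> (real^'n^'n)"

definition in_U :: "('n::finite, 'm::finite) param \<Rightarrow> bool" where
  "in_U u = (case u of (s, L, V, \<xi>, Q) \<Rightarrow>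
     (\<forall>i. 0 \<le> L $ i) \<and> transpose Q = Q \<and> (\<forall>d. 0 \<le> d \<bullet> (Q *v d)))"

definition Hfun :: "(real^'n \<Rightarrow> real^'m::finite) \<Rightarrow> ('n::finite, 'm) param \<Rightarrow> real^'n \<Rightarrow> real^'m" where
  "Hfun g u x = (case u of (s, L, V, \<xi>, Q) \<Rightarrow> Gfun g x s V L)"

definition Sset :: "(real^'n \<Rightarrow> real^'m::finite) \<Rightarrow> ('n::finite, 'm) param \<Rightarrow> (real^'n) set" where
  "Sset g u = {x. Hfun g u x \<in> nonpos_orthant}"

definition gradH :: "('n::finite, 'm::finite) param \<Rightarrow> real^'n \<Rightarrow> real^'m \<Rightarrow> real^'n" where
  "gradH u x lam = (case u of (s, L, V, \<xi>, Q) \<Rightarrow> V *v lam + (L \<bullet> lam) *\<^sub>R (x - s))"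

definition Lambda_set :: "(real^'n \<Rightarrow> real^'m::finite) \<Rightarrow> ('n::finite, 'm) param \<Rightarrow> real^'n \<Rightarrow> real^'n \<Rightarrow> (real^'m) set" where
  "Lambda_set g u x y = {lam \<in> normal_cone nonpos_orthant (Hfun g u x). gradH u x lam = y}"

definition partial_BMP :: "(real^'n \<Rightarrow> real^'m::finite) \<Rightarrow> ('n::finite, 'm) param \<Rightarrow> real^'n \<Rightarrow> bool" where
  "partial_BMP g us xs =
     (xs \<in> Sset g us \<and>
      (\<exists>\<kappa>>0. \<exists>UU VV. open UU \<and> us \<in> UU \<and> open VV \<and> xs \<in> VV \<and>
         (\<forall>u\<in>UU. in_U u \<longrightarrow> (\<forall>x\<in>VV \<inter> Sset g u. \<forall>y\<in>normal_cone (Sset g u) x.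
             \<exists>lam\<in>Lambda_set g u x y. norm lam \<le> \<kappa> * norm y))))"

end

theory Submission
  imports Defs "HOL-Analysis.Analysis"
begin

lemma sc_frechet:
  fixes f :: "'a::real_inner \<Rightarrow> real"
  assumes cvx: "convex_on B (\<lambda>y. \<rho> / 2 * (norm y)\<^sup>2 - f y)" and B: "open B"
    and rho: "0 \<le> \<rho>" and z: "z \<in> B" and yB: "y \<in> B" and v: "v \<in> frechet_subdiff f z"
  shows "f y \<le> f z + v \<bullet> (y - z) + \<rho> / 2 * (norm (y - z))\<^sup>2"
proof (cases "y = z")
  case True then show ?thesis by simp
next
  case False
  define d where "d = y - z"
  have dpos: "norm d > 0" using False by (simp add: d_def)
  define h where "h = (\<lambda>y. \<rho> / 2 * (norm y)\<^sup>2 - f y)"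
  have key: "f y \<le> f z + v \<bullet> d + \<rho> / 2 * (norm d)\<^sup>2 + e" if e: "e > 0" for e
  proof -
    define c where "c = norm d + \<rho> / 2 * (norm d)\<^sup>2 + 1"
    have cpos: "c > 0" using dpos rho by (simp add: c_def add_pos_nonneg)
    define \<epsilon> where "\<epsilon> = e / c"
    have epos: "\<epsilon> > 0" using e cpos by (simp add: \<epsilon>_def)
    obtain \<delta>1 where d1: "\<delta>1 > 0" and fr: "\<And>w. norm (w - z) < \<delta>1 \<Longrightarrow> f z + v \<bullet> (w - z) - \<epsilon> * norm (w - z) \<le> f w"
      using v epos unfolding frechet_subdiff_def by blast
    obtain \<delta>2 where d2: "\<delta>2 > 0" and bsub: "ball z \<delta>2 \<subseteq> B" using B z openE by blast
    define s where "s = min \<epsilon> (min \<delta>1 \<delta>2 / (2 * norm d))"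
    have spos: "s > 0" using epos d1 d2 dpos by (simp add: s_def)
    have sle: "s \<le> \<epsilon>" by (simp add: s_def)
    have snd: "s * norm d < min \<delta>1 \<delta>2"
    proof -
      have "s \<le> min \<delta>1 \<delta>2 / (2 * norm d)" by (simp add: s_def)
      hence "s * norm d \<le> min \<delta>1 \<delta>2 / 2" using dpos by (simp add: field_simps)
      thus ?thesis using d1 d2 by linarith
    qed
    define w where "w = z - s *\<^sub>R d"
    have wz: "norm (w - z) = s * norm d" using spos by (simp add: w_def)
    have wB: "w \<in> B" using bsub snd wz by (auto simp: dist_norm norm_minus_commute)
    define t where "t = s / (1 + s)"
    have t0: "0 \<le> t" "t \<le> 1" using spos by (auto simp: t_def)
    have zc: "(1 - t) *\<^sub>R w + t *\<^sub>R y = z"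
    proof -
      have "(1 + s) *\<^sub>R ((1 - t) *\<^sub>R w + t *\<^sub>R y) = w + s *\<^sub>R y"
        using spos by (simp add: t_def scaleR_add_right field_simps)
      also have "\<dots> = (1 + s) *\<^sub>R z" by (simp add: w_def d_def algebra_simps)
      finally show ?thesis using spos by simp
    qed
    have conv: "h z \<le> (1 - t) * h w + t * h y"
      using convex_onD[OF cvx[folded h_def] t0 wB yB] zc by simp
    hence conv2: "(1 + s) * h z \<le> h w + s * h y"
    proof -
      have "(1 + s) * h z \<le> (1 + s) * ((1 - t) * h w + t * h y)"
        using conv spos by (intro mult_left_mono) auto
      also have "\<dots> = ((1 + s) * (1 - t)) * h w + ((1 + s) * t) * h y" by (simp add: algebra_simps)
      also have "(1 + s) * (1 - t) = 1" using spos by (simp add: t_def field_simps)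
      also have "(1 + s) * t = s" using spos by (simp add: t_def field_simps)
      finally show ?thesis by simp
    qed
    have nw: "(norm w)\<^sup>2 = (norm z)\<^sup>2 - 2 * s * (z \<bullet> d) + s\<^sup>2 * (norm d)\<^sup>2"
    proof -
      have "(norm w)\<^sup>2 = w \<bullet> w" by (simp add: dot_square_norm)
      also have "\<dots> = z \<bullet> z - 2 * s * (z \<bullet> d) + s\<^sup>2 * (d \<bullet> d)"
        by (simp add: w_def inner_diff_left inner_diff_right inner_commute power2_eq_square algebra_simps)
      finally show ?thesis by (simp add: dot_square_norm)
    qed
    have ny: "(norm y)\<^sup>2 = (norm z)\<^sup>2 + 2 * (z \<bullet> d) + (norm d)\<^sup>2"
    proof -
      have "y = z + d" by (simp add: d_def)
      hence "y \<bullet> y = z \<bullet> z + 2 * (z \<bullet> d) + d \<bullet> d"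
        by (simp add: inner_add_left inner_add_right inner_commute)
      thus ?thesis by (simp add: dot_square_norm)
    qed
    have frw: "f z - s * (v \<bullet> d) - \<epsilon> * (s * norm d) \<le> f w"
      using fr[of w] wz snd spos by (simp add: w_def inner_diff_right)
    have A: "s * f y \<le> (1 + s) * f z - f w + \<rho> / 2 * s * (1 + s) * (norm d)\<^sup>2"
    proof -
      have id: "(1+s)*(r/2*aZ - afz) - (r/2*(aZ - 2 * s * ap + s\<^sup>2*aD) - afw) - s*(r/2*(aZ + 2*ap + aD) - afy)
          = - r / 2 * s * (1 + s)*aD - (1+s)*afz + afw + s*afy" for r aZ afz ap aD afw afy :: real
        by (simp add: field_simps power2_eq_square)
      have "(1 + s) * h z - h w - s * h y = - \<rho> / 2 * s * (1 + s) * (norm d)\<^sup>2 - (1 + s) * f z + f w + s * f y"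
        unfolding h_def nw ny using id[of \<rho> "(norm z)\<^sup>2" "f z" "z \<bullet> d" "(norm d)\<^sup>2" "f w" "f y"] by simp
      thus ?thesis using conv2 by (simp add: algebra_simps)
    qed
    have B1: "s * f y \<le> s * (f z + v \<bullet> d + \<epsilon> * norm d + \<rho> / 2 * (1 + s) * (norm d)\<^sup>2)"
      using A frw by (simp add: algebra_simps)
    hence B2: "f y \<le> f z + v \<bullet> d + \<epsilon> * norm d + \<rho> / 2 * (1 + s) * (norm d)\<^sup>2"
      using spos by simp
    have "\<rho> / 2 * (1 + s) * (norm d)\<^sup>2 \<le> \<rho> / 2 * (norm d)\<^sup>2 + \<epsilon> * (\<rho> / 2 * (norm d)\<^sup>2)"
    proof -
      have "\<rho> / 2 * s * (norm d)\<^sup>2 \<le> \<rho> / 2 * \<epsilon> * (norm d)\<^sup>2"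
        using sle rho by (intro mult_right_mono mult_left_mono) auto
      thus ?thesis by (simp add: algebra_simps)
    qed
    hence "f y \<le> f z + v \<bullet> d + \<rho> / 2 * (norm d)\<^sup>2 + \<epsilon> * (norm d + \<rho> / 2 * (norm d)\<^sup>2)"
      using B2 distrib_left[of \<epsilon> "norm d" "\<rho> / 2 * (norm d)\<^sup>2"] by linarith
    also have "\<epsilon> * (norm d + \<rho> / 2 * (norm d)\<^sup>2) \<le> e"
    proof -
      have "\<epsilon> * (norm d + \<rho> / 2 * (norm d)\<^sup>2) \<le> \<epsilon> * c" using epos by (simp add: c_def)
      also have "\<dots> = e" using cpos by (simp add: \<epsilon>_def)
      finally show ?thesis .
    qed
    finally show ?thesis by simp
  qed
  show ?thesis using field_le_epsilon[OF key] by (simp add: d_def)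
qed

lemma sc_limiting:
  fixes f :: "'a::real_inner \<Rightarrow> real"
  assumes cvx: "convex_on B (\<lambda>y. \<rho> / 2 * (norm y)\<^sup>2 - f y)" and B: "open B"
    and rho: "0 \<le> \<rho>" and z: "z \<in> B" and yB: "y \<in> B" and v: "v \<in> limiting_subdiff f z"
  shows "f y \<le> f z + v \<bullet> (y - z) + \<rho> / 2 * (norm (y - z))\<^sup>2"
proof -
  obtain xs vs where xs: "xs \<longlonglongrightarrow> z" and fx: "(\<lambda>k. f (xs k)) \<longlonglongrightarrow> f z"
    and vs: "\<And>k. vs k \<in> frechet_subdiff f (xs k)" and vv: "vs \<longlonglongrightarrow> v"
    using v unfolding limiting_subdiff_def by blast
  have ev: "eventually (\<lambda>k. xs k \<in> B) sequentially"
    using xs B z by (simp add: tendsto_def)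
  have ev2: "eventually (\<lambda>k. f y \<le> f (xs k) + vs k \<bullet> (y - xs k) + \<rho> / 2 * (norm (y - xs k))\<^sup>2) sequentially"
    using ev by eventually_elim (rule sc_frechet[OF cvx B rho _ yB vs])
  have lim: "(\<lambda>k. f (xs k) + vs k \<bullet> (y - xs k) + \<rho> / 2 * (norm (y - xs k))\<^sup>2) \<longlonglongrightarrow> f z + v \<bullet> (y - z) + \<rho> / 2 * (norm (y - z))\<^sup>2"
    by (intro tendsto_intros fx vv xs)
  show ?thesis using tendsto_le[OF trivial_limit_sequentially lim tendsto_const ev2] .
qed

lemma frechet_bound:
  fixes f :: "'a::real_inner \<Rightarrow> real"
  assumes lip: "lipschitz_on K (ball x0 \<delta>) f" and z: "z \<in> ball x0 \<delta>" and v: "v \<in> frechet_subdiff f z"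
  shows "norm v \<le> K"
proof (cases "v = 0")
  case True then show ?thesis using lip by (simp add: lipschitz_on_def)
next
  case False
  have K0: "0 \<le> K" using lip by (simp add: lipschitz_on_def)
  have "norm v \<le> K + e" if e: "e > 0" for e
  proof -
    obtain \<delta>1 where d1: "\<delta>1 > 0" and fr: "\<And>w. norm (w - z) < \<delta>1 \<Longrightarrow> f z + v \<bullet> (w - z) - e * norm (w - z) \<le> f w"
      using v e unfolding frechet_subdiff_def by blast
    obtain \<delta>2 where d2: "\<delta>2 > 0" and bsub: "ball z \<delta>2 \<subseteq> ball x0 \<delta>" using z openE[OF open_ball] by blast
    define t where "t = min \<delta>1 \<delta>2 / 2"
    have t: "t > 0" "t < \<delta>1" "t < \<delta>2" using d1 d2 by (auto simp: t_def)
    define u where "u = (1 / norm v) *\<^sub>R v"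
    have nu: "norm u = 1" using False by (simp add: u_def)
    have vu: "v \<bullet> u = norm v" using False by (simp add: u_def power2_norm_eq_inner[symmetric] power2_eq_square)
    define w where "w = z + t *\<^sub>R u"
    have wz: "norm (w - z) = t" using nu t by (simp add: w_def)
    have "w \<in> ball z \<delta>2" using wz t by (simp add: dist_norm norm_minus_commute)
    hence wB: "w \<in> ball x0 \<delta>" using bsub by blast
    have "f z + t * norm v - e * t \<le> f w" using fr[of w] wz t vu by (simp add: w_def)
    moreover have "f w - f z \<le> K * t"
      using lip wB z wz unfolding lipschitz_on_def by (auto simp: dist_real_def dist_norm abs_le_iff)
    ultimately have "t * norm v \<le> t * (K + e)" by (simp add: algebra_simps)
    thus ?thesis using t by simp
  qed
  thus ?thesis using field_le_epsilon by blast
qed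

lemma limiting_bound:
  fixes f :: "'a::real_inner \<Rightarrow> real"
  assumes lip: "lipschitz_on K (ball x0 \<delta>) f" and z: "z \<in> ball x0 \<delta>" and v: "v \<in> limiting_subdiff f z"
  shows "norm v \<le> K"
proof -
  obtain xs vs where xs: "xs \<longlonglongrightarrow> z"
    and vs: "\<And>k. vs k \<in> frechet_subdiff f (xs k)" and vv: "vs \<longlonglongrightarrow> v"
    using v unfolding limiting_subdiff_def by blast
  have ev: "eventually (\<lambda>k. xs k \<in> ball x0 \<delta>) sequentially"
    using xs z open_ball unfolding tendsto_def by blast
  have "eventually (\<lambda>k. norm (vs k) \<le> K) sequentially"
    using ev by eventually_elim (rule frechet_bound[OF lip _ vs])
  thus ?thesis using tendsto_le[OF trivial_limit_sequentially tendsto_const tendsto_norm[OF vv]] by blast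
qed

lemma convex_frechet_sub:
  fixes \<phi> :: "'a::real_inner \<Rightarrow> real"
  assumes cvx: "convex_on UNIV \<phi>" and v: "v \<in> frechet_subdiff \<phi> z"
  shows "\<phi> z + v \<bullet> (y - z) \<le> \<phi> y"
proof -
  define d where "d = y - z"
  have "\<phi> z + v \<bullet> d \<le> \<phi> y + e" if e: "e > 0" for e
  proof (cases "d = 0")
    case True then show ?thesis using e by (simp add: d_def)
  next
    case False
    hence dpos: "norm d > 0" by simp
    define \<epsilon> where "\<epsilon> = e / norm d"
    have ep: "\<epsilon> > 0" using e dpos by (simp add: \<epsilon>_def)
    obtain \<delta>1 where d1: "\<delta>1 > 0" and fr: "\<And>w. norm (w - z) < \<delta>1 \<Longrightarrow> \<phi> z + v \<bullet> (w - z) - \<epsilon> * norm (w - z) \<le> \<phi> w"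
      using v ep unfolding frechet_subdiff_def by blast
    define s where "s = min (1/2) (\<delta>1 / (2 * norm d))"
    have s: "s > 0" "s \<le> 1" using d1 dpos by (auto simp: s_def)
    have snd: "s * norm d < \<delta>1"
    proof -
      have "s \<le> \<delta>1 / (2 * norm d)" by (simp add: s_def)
      hence "s * norm d \<le> \<delta>1 / 2" using dpos by (simp add: field_simps)
      thus ?thesis using d1 by linarith
    qed
    define w where "w = z + s *\<^sub>R d"
    have "w = (1 - s) *\<^sub>R z + s *\<^sub>R y" by (simp add: w_def d_def algebra_simps)
    hence cw: "\<phi> w \<le> (1 - s) * \<phi> z + s * \<phi> y" using convex_onD[OF cvx, of s z y] s by simp
    have "\<phi> z + s * (v \<bullet> d) - \<epsilon> * (s * norm d) \<le> \<phi> w" using fr[of w] snd s by (simp add: w_def)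
    with cw have "s * (\<phi> z + v \<bullet> d) \<le> s * (\<phi> y + \<epsilon> * norm d)" by (simp add: algebra_simps)
    hence "\<phi> z + v \<bullet> d \<le> \<phi> y + \<epsilon> * norm d" using s by simp
    thus ?thesis using dpos by (simp add: \<epsilon>_def)
  qed
  hence "\<phi> z + v \<bullet> d \<le> \<phi> y" by (rule field_le_epsilon)
  thus ?thesis by (simp add: d_def)
qed

lemma convex_limiting_sub:
  fixes \<phi> :: "'a::real_inner \<Rightarrow> real"
  assumes cvx: "convex_on UNIV \<phi>" and v: "v \<in> limiting_subdiff \<phi> z"
  shows "\<phi> z + v \<bullet> (y - z) \<le> \<phi> y"
proof -
  obtain xs vs where xs: "xs \<longlonglongrightarrow> z" and fx: "(\<lambda>k. \<phi> (xs k)) \<longlonglongrightarrow> \<phi> z"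
    and vs: "\<And>k. vs k \<in> frechet_subdiff \<phi> (xs k)" and vv: "vs \<longlonglongrightarrow> v"
    using v unfolding limiting_subdiff_def by blast
  have lim: "(\<lambda>k. \<phi> (xs k) + vs k \<bullet> (y - xs k)) \<longlonglongrightarrow> \<phi> z + v \<bullet> (y - z)"
    by (intro tendsto_intros fx vv xs)
  have "eventually (\<lambda>k. \<phi> (xs k) + vs k \<bullet> (y - xs k) \<le> \<phi> y) sequentially"
    by (simp add: convex_frechet_sub[OF cvx vs])
  thus ?thesis
    using tendsto_le[OF trivial_limit_sequentially tendsto_const lim] by blast
qed

lemma convex_sub_limiting:
  fixes \<phi> :: "'a::real_inner \<Rightarrow> real"
  assumes "\<And>y. \<phi> z + v \<bullet> (y - z) \<le> \<phi> y"
  shows "v \<in> limiting_subdiff \<phi> z"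
proof -
  have "\<forall>\<epsilon>>0. \<exists>\<delta>>0. \<forall>y. norm (y - z) < \<delta> \<longrightarrow> \<phi> z + v \<bullet> (y - z) - \<epsilon> * norm (y - z) \<le> \<phi> y"
  proof (intro allI impI)
    fix \<epsilon> :: real assume e: "\<epsilon> > 0"
    show "\<exists>\<delta>>0. \<forall>y. norm (y - z) < \<delta> \<longrightarrow> \<phi> z + v \<bullet> (y - z) - \<epsilon> * norm (y - z) \<le> \<phi> y"
    proof (intro exI[of _ 1] conjI allI impI)
      fix y
      have "0 \<le> \<epsilon> * norm (y - z)" using e by simp
      thus "\<phi> z + v \<bullet> (y - z) - \<epsilon> * norm (y - z) \<le> \<phi> y" using assms[of y] by linarith
    qed simp
  qed
  hence "v \<in> frechet_subdiff \<phi> z" unfolding frechet_subdiff_def by blast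
  thus ?thesis unfolding limiting_subdiff_def
    by (intro CollectI exI[of _ "\<lambda>_. z"] exI[of _ "\<lambda>_. v"]) auto
qed

lemma null_by_bound:
  fixes a :: "nat \<Rightarrow> 'a::real_normed_vector"
  assumes "\<And>k. norm (a k) < 1 / (real k + 1)"
  shows "a \<longlonglongrightarrow> 0"
proof -
  have lim: "(\<lambda>k. 1 / (real k + 1)) \<longlonglongrightarrow> (0::real)"
    using LIMSEQ_inverse_real_of_nat by (simp add: inverse_eq_divide add.commute)
  have h: "\<forall>k. norm (a k) \<le> 1 / (real k + 1)" using assms less_imp_le by blast
  show ?thesis by (rule Lim_null_comparison[OF always_eventually[OF h] lim])
qed

lemma close_seq:
  fixes a b :: "nat \<Rightarrow> 'a::real_normed_vector"
  assumes "\<And>k. norm (a k - b k) < 1 / (real k + 1)" "b \<longlonglongrightarrow> l"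
  shows "a \<longlonglongrightarrow> l"
proof -
  have "(\<lambda>k. (a k - b k) + b k) \<longlonglongrightarrow> 0 + l"
    by (intro tendsto_add null_by_bound assms)
  thus ?thesis by simp
qed

lemma limiting_closed:
  fixes f :: "'a::real_inner \<Rightarrow> real"
  assumes xk: "xk \<longlonglongrightarrow> x" and fk: "(\<lambda>k. f (xk k)) \<longlonglongrightarrow> f x"
    and vk: "\<And>k. vk k \<in> limiting_subdiff f (xk k)" and vv: "vk \<longlonglongrightarrow> v"
  shows "v \<in> limiting_subdiff f x"
proof -
  have ex: "\<exists>p w. norm (p - xk k) < 1 / (real k + 1) \<and> norm (f p - f (xk k)) < 1 / (real k + 1)
          \<and> w \<in> frechet_subdiff f p \<and> norm (w - vk k) < 1 / (real k + 1)" for k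
  proof -
    obtain xs vs where xs: "xs \<longlonglongrightarrow> xk k" and fx: "(\<lambda>j. f (xs j)) \<longlonglongrightarrow> f (xk k)"
      and vs: "\<And>j. vs j \<in> frechet_subdiff f (xs j)" and vv: "vs \<longlonglongrightarrow> vk k"
      using vk[of k] unfolding limiting_subdiff_def by blast
    have e: "1 / (real k + 1) > 0" by simp
    have "eventually (\<lambda>j. dist (xs j) (xk k) < 1 / (real k + 1)) sequentially"
      using tendstoD[OF xs e] .
    moreover have "eventually (\<lambda>j. dist (f (xs j)) (f (xk k)) < 1 / (real k + 1)) sequentially"
      using tendstoD[OF fx e] .
    moreover have "eventually (\<lambda>j. dist (vs j) (vk k) < 1 / (real k + 1)) sequentially"
      using tendstoD[OF vv e] .
    ultimately have "eventually (\<lambda>j. dist (xs j) (xk k) < 1 / (real k + 1) \<and> dist (f (xs j)) (f (xk k)) < 1 / (real k + 1)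
       \<and> dist (vs j) (vk k) < 1 / (real k + 1)) sequentially"
      by eventually_elim auto
    then obtain j where "dist (xs j) (xk k) < 1 / (real k + 1) \<and> dist (f (xs j)) (f (xk k)) < 1 / (real k + 1)
       \<and> dist (vs j) (vk k) < 1 / (real k + 1)"
      using eventually_sequentially by auto
    thus ?thesis using vs[of j] by (auto simp: dist_norm)
  qed
  have ex': "\<forall>k. \<exists>p w. norm (p - xk k) < 1 / (real k + 1) \<and> norm (f p - f (xk k)) < 1 / (real k + 1)
          \<and> w \<in> frechet_subdiff f p \<and> norm (w - vk k) < 1 / (real k + 1)" using ex by blast
  obtain P where P: "\<forall>k. \<exists>w. norm (P k - xk k) < 1 / (real k + 1) \<and> norm (f (P k) - f (xk k)) < 1 / (real k + 1)
          \<and> w \<in> frechet_subdiff f (P k) \<and> norm (w - vk k) < 1 / (real k + 1)"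
    using choice[OF ex'] by blast
  obtain W where PW0: "\<forall>k. norm (P k - xk k) < 1 / (real k + 1) \<and> norm (f (P k) - f (xk k)) < 1 / (real k + 1)
          \<and> W k \<in> frechet_subdiff f (P k) \<and> norm (W k - vk k) < 1 / (real k + 1)"
    using choice[OF P] by blast
  note PW = PW0[rule_format]
  have "P \<longlonglongrightarrow> x" using close_seq[OF _ xk] PW by blast
  moreover have "(\<lambda>k. f (P k)) \<longlonglongrightarrow> f x" using close_seq[OF _ fk, of "\<lambda>k. f (P k)"] PW by blast
  moreover have "W \<longlonglongrightarrow> v" using close_seq[OF _ vv] PW by blast
  ultimately show ?thesis unfolding limiting_subdiff_def using PW by blast
qed

lemma loclip_isCont:
  assumes "loc_lipschitz_at f q"
  shows "isCont f q"
proof -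
  obtain \<delta> K where d: "\<delta> > 0" and l: "lipschitz_on K (ball q \<delta>) f"
    using assms unfolding loc_lipschitz_at_def by blast
  have "continuous_on (ball q \<delta>) f" by (rule lipschitz_on_continuous_on[OF l])
  thus ?thesis using d by (metis centre_in_ball continuous_on_eq_continuous_at open_ball)
qed

lemma local_data:
  fixes f :: "'a::euclidean_space \<Rightarrow> real"
  assumes "loc_lipschitz_at f q" "upper_C2_at f q"
  shows "\<exists>\<delta>>0. \<exists>\<rho>\<ge>0. \<exists>K. convex_on (ball q \<delta>) (\<lambda>y. \<rho> / 2 * (norm y)\<^sup>2 - f y) \<and> lipschitz_on K (ball q \<delta>) f"
proof -
  obtain \<delta>1 K where d1: "\<delta>1 > 0" and l: "lipschitz_on K (ball q \<delta>1) f"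
    using assms unfolding loc_lipschitz_at_def by blast
  obtain \<delta>2 \<rho> where d2: "\<delta>2 > 0" and r: "\<rho> \<ge> 0" and c: "convex_on (ball q \<delta>2) (\<lambda>y. \<rho> / 2 * (norm y)\<^sup>2 - f y)"
    using assms unfolding upper_C2_at_def by blast
  define \<delta> where "\<delta> = min \<delta>1 \<delta>2"
  have "convex_on (ball q \<delta>) (\<lambda>y. \<rho> / 2 * (norm y)\<^sup>2 - f y)"
    by (rule convex_on_subset[OF c]) (auto simp: \<delta>_def)
  moreover have "lipschitz_on K (ball q \<delta>) f"
    by (rule lipschitz_on_subset[OF l]) (auto simp: \<delta>_def)
  moreover have "\<delta> > 0" using d1 d2 by (simp add: \<delta>_def)
  ultimately show ?thesis using r by blast
qed

lemma uniform_sc: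
  fixes f :: "'a::euclidean_space \<Rightarrow> real"
  assumes S: "compact S" and reg: "\<forall>q\<in>S. loc_lipschitz_at f q \<and> upper_C2_at f q"
  shows "\<exists>\<rho>\<ge>0. \<exists>K\<ge>0. \<forall>z\<in>S. \<forall>v\<in>limiting_subdiff f z. norm v \<le> K \<and>
           (\<forall>y\<in>S. f y \<le> f z + v \<bullet> (y - z) + \<rho> / 2 * (norm (y - z))\<^sup>2)"
proof (cases "S = {}")
  case True then show ?thesis by (intro exI[of _ 0]) auto
next
  case False
  have "\<forall>q\<in>S. \<exists>\<delta>. \<delta> > 0 \<and> (\<exists>\<rho>\<ge>0. \<exists>K. convex_on (ball q \<delta>) (\<lambda>y. \<rho> / 2 * (norm y)\<^sup>2 - f y) \<and> lipschitz_on K (ball q \<delta>) f)"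
    using reg local_data by blast
  then obtain D where D: "\<forall>q\<in>S. D q > 0 \<and> (\<exists>\<rho>\<ge>0. \<exists>K. convex_on (ball q (D q)) (\<lambda>y. \<rho> / 2 * (norm y)\<^sup>2 - f y) \<and> lipschitz_on K (ball q (D q)) f)"
    by (rule bchoice[elim_format]) blast
  hence "\<forall>q\<in>S. \<exists>\<rho>. D q > 0 \<and> \<rho> \<ge> 0 \<and> (\<exists>K. convex_on (ball q (D q)) (\<lambda>y. \<rho> / 2 * (norm y)\<^sup>2 - f y) \<and> lipschitz_on K (ball q (D q)) f)"
    by blast
  then obtain R where R: "\<forall>q\<in>S. D q > 0 \<and> R q \<ge> 0 \<and> (\<exists>K. convex_on (ball q (D q)) (\<lambda>y. R q / 2 * (norm y)\<^sup>2 - f y) \<and> lipschitz_on K (ball q (D q)) f)"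
    by (rule bchoice[elim_format]) blast
  hence "\<forall>q\<in>S. \<exists>K. D q > 0 \<and> R q \<ge> 0 \<and> convex_on (ball q (D q)) (\<lambda>y. R q / 2 * (norm y)\<^sup>2 - f y) \<and> lipschitz_on K (ball q (D q)) f"
    by blast
  then obtain KK where KR: "\<forall>q\<in>S. D q > 0 \<and> R q \<ge> 0 \<and> convex_on (ball q (D q)) (\<lambda>y. R q / 2 * (norm y)\<^sup>2 - f y) \<and> lipschitz_on (KK q) (ball q (D q)) f"
    by (rule bchoice[elim_format]) blast
  have cont: "continuous_on S f"
    using reg loclip_isCont continuous_at_imp_continuous_on by blast
  have "bounded (f ` S)" by (rule compact_imp_bounded[OF compact_continuous_image[OF cont S]])
  then obtain Mf0 where Mf0: "\<forall>y\<in>S. norm (f y) \<le> Mf0" unfolding bounded_iff by blast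
  define Mf where "Mf = max Mf0 0"
  have Mf: "\<And>y. y \<in> S \<Longrightarrow> \<bar>f y\<bar> \<le> Mf" "Mf \<ge> 0" using Mf0 by (auto simp: Mf_def)
  have "S \<subseteq> (\<Union>q\<in>S. ball q (D q / 2))" using KR by force
  then obtain T where T: "T \<subseteq> S" "finite T" "S \<subseteq> (\<Union>q\<in>T. ball q (D q / 2))"
    using compactE_image[OF S, of S "\<lambda>q. ball q (D q / 2)"] by auto
  have Tne: "T \<noteq> {}" using T(3) False by auto
  define ds where "ds = Min ((\<lambda>q. D q / 2) ` T)"
  define rs where "rs = Max (R ` T)"
  define ks where "ks = Max (KK ` T)"
  have ds: "ds > 0" unfolding ds_def using T KR Tne by (subst Min_gr_iff) auto
  have dsle: "\<And>q. q \<in> T \<Longrightarrow> ds \<le> D q / 2" unfolding ds_def using T(2) by (metis Min_le finite_imageI image_eqI)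
  have rsge: "\<And>q. q \<in> T \<Longrightarrow> R q \<le> rs" unfolding rs_def using T by auto
  have ksge: "\<And>q. q \<in> T \<Longrightarrow> KK q \<le> ks" unfolding ks_def using T by auto
  obtain q0 where q0: "q0 \<in> T" using Tne by blast
  have rs0: "rs \<ge> 0" using rsge[OF q0] KR q0 T by force
  have "0 \<le> KK q0" using KR q0 T(1) lipschitz_on_nonneg by blast
  hence ks0: "ks \<ge> 0" using ksge[OF q0] by linarith
  define \<rho> where "\<rho> = rs + 4 * Mf / ds\<^sup>2 + 2 * ks / ds"
  have rho_ge: "rs \<le> \<rho>" using Mf ds ks0 by (simp add: \<rho>_def)
  have rho0: "0 \<le> \<rho>" using rs0 rho_ge by linarith
  show ?thesis
  proof (rule exI[of _ \<rho>], rule conjI[OF rho0], rule exI[of _ ks], rule conjI[OF ks0], intro ballI)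
    fix z v assume z: "z \<in> S" and v: "v \<in> limiting_subdiff f z"
    obtain q where q: "q \<in> T" and zq: "z \<in> ball q (D q / 2)" using T(3) z by blast
    have qS: "q \<in> S" using q T by blast
    have zq': "z \<in> ball q (D q)" using zq KR qS by auto
    have nv: "norm v \<le> ks"
      using limiting_bound[of "KK q" q "D q" f z v] KR qS zq' v ksge[OF q] by auto
    have "\<forall>y\<in>S. f y \<le> f z + v \<bullet> (y - z) + \<rho> / 2 * (norm (y - z))\<^sup>2"
    proof
      fix y assume y: "y \<in> S"
      define n where "n = norm (y - z)"
      show "f y \<le> f z + v \<bullet> (y - z) + \<rho> / 2 * (norm (y - z))\<^sup>2"
      proof (cases "n < ds")
        case True
        have "dist q y \<le> dist q z + dist z y" by (rule dist_triangle)
        also have "dist z y = n" by (simp add: n_def dist_norm norm_minus_commute)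
        finally have "dist q y < D q" using zq True dsle[OF q] by simp
        hence yq: "y \<in> ball q (D q)" by simp
        have "f y \<le> f z + v \<bullet> (y - z) + R q / 2 * (norm (y - z))\<^sup>2"
          using sc_limiting[of "ball q (D q)" "R q" f z y v] KR qS zq' yq v by auto
        also have "R q / 2 * (norm (y - z))\<^sup>2 \<le> \<rho> / 2 * (norm (y - z))\<^sup>2"
          using rsge[OF q] rho_ge by (intro mult_right_mono) auto
        finally show ?thesis by simp
      next
        case False
        hence nds: "ds \<le> n" by simp
        have n0: "n \<ge> 0" by (simp add: n_def)
        have "- (v \<bullet> (y - z)) \<le> norm v * n" using Cauchy_Schwarz_ineq2[of v "y - z"] by (simp add: n_def)
        also have "\<dots> \<le> ks * n" using nv n0 by (rule mult_right_mono)
        finally have cs: "- (v \<bullet> (y - z)) \<le> ks * n" .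
        have fy: "f y - f z \<le> 2 * Mf" using Mf(1)[OF y] Mf(1)[OF z] by linarith
        have sq: "ds\<^sup>2 \<le> n\<^sup>2" using nds ds by (intro power_mono) auto
        have t1: "2 * Mf \<le> 2 * Mf / ds\<^sup>2 * n\<^sup>2"
        proof -
          have "2 * Mf = 2 * Mf / ds\<^sup>2 * ds\<^sup>2" using ds by simp
          also have "\<dots> \<le> 2 * Mf / ds\<^sup>2 * n\<^sup>2" using sq Mf(2) ds by (intro mult_left_mono) auto
          finally show ?thesis .
        qed
        have t2: "ks * n \<le> ks / ds * n\<^sup>2"
        proof -
          have "ks * n = ks / ds * (ds * n)" using ds by simp
          also have "\<dots> \<le> ks / ds * (n * n)" using nds n0 ks0 ds by (intro mult_left_mono mult_right_mono) auto
          finally show ?thesis by (simp add: power2_eq_square)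
        qed
        have t3: "rs / 2 * n\<^sup>2 \<ge> 0" using rs0 by simp
        have "\<rho> / 2 * n\<^sup>2 = rs / 2 * n\<^sup>2 + 2 * Mf / ds\<^sup>2 * n\<^sup>2 + ks / ds * n\<^sup>2"
          by (simp add: \<rho>_def algebra_simps add_divide_distrib)
        hence "f y - f z - v \<bullet> (y - z) \<le> \<rho> / 2 * n\<^sup>2" using fy cs t1 t2 t3 by linarith
        thus ?thesis by (simp add: n_def)
      qed
    qed
    thus "norm v \<le> ks \<and> (\<forall>y\<in>S. f y \<le> f z + v \<bullet> (y - z) + \<rho> / 2 * (norm (y - z))\<^sup>2)" using nv by blast
  qed
qed

lemma orth_mem: "z \<in> nonpos_orthant \<longleftrightarrow> (\<forall>i. z $ i \<le> 0)"
  by (simp add: nonpos_orthant_def)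

lemma closed_orth: "closed (nonpos_orthant :: (real^'m::finite) set)"
proof -
  have "nonpos_orthant = (\<Inter>i. {z::real^'m. z $ i \<le> 0})" by (auto simp: nonpos_orthant_def)
  moreover have "closed {z::real^'m. z $ i \<le> 0}" for i
    by (intro closed_Collect_le continuous_intros)
  ultimately show ?thesis by (metis closed_INT)
qed

lemma regular_orth_D:
  fixes z lam :: "real^'m::finite"
  assumes z: "z \<in> nonpos_orthant" and l: "lam \<in> regular_normal_cone nonpos_orthant z"
  shows "0 \<le> lam $ i \<and> (z $ i < 0 \<longrightarrow> lam $ i = 0)"
proof -
  have R: "\<forall>\<epsilon>>0. \<exists>\<delta>>0. \<forall>y\<in>nonpos_orthant. norm (y - z) < \<delta> \<longrightarrow> lam \<bullet> (y - z) \<le> \<epsilon> * norm (y - z)"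
    using l z by (simp add: regular_normal_cone_def)
  have ge: "- lam $ i \<le> e" if e: "e > 0" for e
  proof -
    obtain \<delta> where d: "\<delta> > 0" and H: "\<forall>y\<in>nonpos_orthant. norm (y - z) < \<delta> \<longrightarrow> lam \<bullet> (y - z) \<le> e * norm (y - z)"
      using R e by blast
    define t where "t = \<delta> / 2"
    have t: "t > 0" "t < \<delta>" using d by (auto simp: t_def)
    define y where "y = z - t *\<^sub>R axis i 1"
    have yo: "y \<in> nonpos_orthant" unfolding orth_mem
    proof
      fix j
      have "y $ j = z $ j - (if j = i then t else 0)" by (simp add: y_def axis_def)
      moreover have "z $ j \<le> 0" using z by (simp add: orth_mem)
      ultimately show "y $ j \<le> 0" using t by auto
    qed
    have ny: "norm (y - z) = t" using t by (simp add: y_def norm_axis_1)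
    have "lam \<bullet> (y - z) = - t * lam $ i" by (simp add: y_def inner_axis)
    hence "- t * lam $ i \<le> e * t" using H yo ny t by auto
    hence "t * (- lam $ i) \<le> t * e" by (simp add: algebra_simps)
    thus ?thesis using t mult_le_cancel_left_pos by blast
  qed
  have le: "lam $ i \<le> e" if e: "e > 0" and zi: "z $ i < 0" for e
  proof -
    obtain \<delta> where d: "\<delta> > 0" and H: "\<forall>y\<in>nonpos_orthant. norm (y - z) < \<delta> \<longrightarrow> lam \<bullet> (y - z) \<le> e * norm (y - z)"
      using R e by blast
    define t where "t = min (\<delta> / 2) (- z $ i)"
    have t: "t > 0" "t < \<delta>" "t \<le> - z $ i" using d zi by (auto simp: t_def)
    define y where "y = z + t *\<^sub>R axis i 1"
    have yo: "y \<in> nonpos_orthant" unfolding orth_mem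
    proof
      fix j
      have "y $ j = z $ j + (if j = i then t else 0)" by (simp add: y_def axis_def)
      moreover have "z $ j \<le> 0" using z by (simp add: orth_mem)
      ultimately show "y $ j \<le> 0" using t by auto
    qed
    have ny: "norm (y - z) = t" using t by (simp add: y_def norm_axis_1)
    have "lam \<bullet> (y - z) = t * lam $ i" by (simp add: y_def inner_axis)
    hence "t * lam $ i \<le> e * t" using H yo ny t by auto
    hence "t * lam $ i \<le> t * e" by (simp add: algebra_simps)
    thus ?thesis using t mult_le_cancel_left_pos by blast
  qed
  have "0 \<le> lam $ i" using ge field_le_epsilon[of "- lam $ i" 0] by simp
  moreover have "z $ i < 0 \<longrightarrow> lam $ i \<le> 0" using le field_le_epsilon[of "lam $ i" 0] by simp
  ultimately show ?thesis by auto
qed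

lemma normal_orth_D:
  fixes z lam :: "real^'m::finite"
  assumes l: "lam \<in> normal_cone nonpos_orthant z"
  shows "z \<in> nonpos_orthant \<and> (\<forall>i. 0 \<le> lam $ i \<and> lam $ i * z $ i = 0)"
proof -
  have z: "z \<in> nonpos_orthant" using l by (simp add: normal_cone_def split: if_splits)
  obtain xs vs where xs: "\<And>k. xs k \<in> nonpos_orthant \<and> vs k \<in> regular_normal_cone nonpos_orthant (xs k)"
    and xl: "xs \<longlonglongrightarrow> z" and vl: "vs \<longlonglongrightarrow> lam"
    using l z by (auto simp: normal_cone_def)
  have "0 \<le> lam $ i \<and> lam $ i * z $ i = 0" for i
  proof -
    have vi: "(\<lambda>k. vs k $ i) \<longlonglongrightarrow> lam $ i" by (intro tendsto_vec_nth vl)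
    have xi: "(\<lambda>k. xs k $ i) \<longlonglongrightarrow> z $ i" by (intro tendsto_vec_nth xl)
    have D: "\<And>k. 0 \<le> vs k $ i \<and> (xs k $ i < 0 \<longrightarrow> vs k $ i = 0)"
      using regular_orth_D xs by blast
    have l0: "0 \<le> lam $ i"
      using tendsto_le[OF trivial_limit_sequentially vi tendsto_const] D by auto
    moreover have "lam $ i = 0" if zi: "z $ i < 0"
    proof -
      have "eventually (\<lambda>k. xs k $ i < 0) sequentially"
        using order_tendstoD(2)[OF xi zi] .
      hence "eventually (\<lambda>k. vs k $ i = 0) sequentially"
        by eventually_elim (use D in auto)
      hence "(\<lambda>k. vs k $ i) \<longlonglongrightarrow> 0" by (rule tendsto_eventually)
      thus ?thesis using vi LIMSEQ_unique by blast
    qed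
    moreover have "z $ i \<le> 0" using z by (simp add: orth_mem)
    ultimately show ?thesis by (cases "z $ i < 0") auto
  qed
  thus ?thesis using z by blast
qed

lemma convex_normal:
  assumes x: "x \<in> C" and H: "\<forall>y\<in>C. v \<bullet> (y - x) \<le> 0"
  shows "v \<in> normal_cone C x"
proof -
  have "v \<in> regular_normal_cone C x"
    unfolding regular_normal_cone_def using x H
    by (auto intro!: exI[of _ 1] order_trans[OF _ mult_nonneg_nonneg])
  hence "\<exists>xs vs. (\<forall>k. xs k \<in> C \<and> vs k \<in> regular_normal_cone C (xs k)) \<and> xs \<longlonglongrightarrow> x \<and> vs \<longlonglongrightarrow> v"
    using x by (rule_tac exI[of _ "\<lambda>_. x"], rule_tac exI[of _ "\<lambda>_. v"]) auto
  thus ?thesis unfolding normal_cone_def using x by simp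
qed

lemma normal_orth_I:
  fixes z lam :: "real^'m::finite"
  assumes z: "z \<in> nonpos_orthant" and H: "\<forall>i. 0 \<le> lam $ i \<and> lam $ i * z $ i = 0"
  shows "lam \<in> normal_cone nonpos_orthant z"
proof (rule convex_normal[OF z], intro ballI)
  fix y :: "real^'m" assume y: "y \<in> nonpos_orthant"
  have "lam \<bullet> (y - z) = (\<Sum>i\<in>UNIV. lam $ i * y $ i - lam $ i * z $ i)"
    by (simp add: inner_vec_def algebra_simps)
  also have "\<dots> = (\<Sum>i\<in>UNIV. lam $ i * y $ i)"
  proof -
    have h: "\<And>i. lam $ i * z $ i = 0" using H by blast
    show ?thesis by (simp add: h)
  qed
  also have "\<dots> \<le> 0" using H y by (intro sum_nonpos) (auto simp: orth_mem mult_nonneg_nonpos)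
  finally show "lam \<bullet> (y - z) \<le> 0" .
qed

lemma kkt_sep:
  fixes \<phi> :: "'a::euclidean_space \<Rightarrow> real"
  assumes C: "convex C" and xb: "xb \<in> C" and cvx: "convex_on UNIV \<phi>"
    and opt: "\<forall>z\<in>C. \<phi> xb \<le> b \<bullet> (z - xb) + \<phi> z"
  shows "\<exists>a. (\<forall>y. \<phi> xb + a \<bullet> (y - xb) \<le> \<phi> y) \<and> (\<forall>z\<in>C. 0 \<le> (a + b) \<bullet> (z - xb))"
proof -
  define A where "A = {p :: 'a \<times> real. \<phi> (fst p) - \<phi> xb < snd p}"
  define B where "B = {p :: 'a \<times> real. fst p \<in> C \<and> snd p \<le> - (b \<bullet> (fst p - xb))}"
  have cA: "convex A" unfolding convex_def
  proof (intro ballI allI impI)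
    fix p q :: "'a \<times> real" and u w :: real
    assume p: "p \<in> A" and q: "q \<in> A" and u: "0 \<le> u" and w: "0 \<le> w" and uw: "u + w = 1"
    have cv: "\<phi> (u *\<^sub>R fst p + w *\<^sub>R fst q) \<le> u * \<phi> (fst p) + w * \<phi> (fst q)"
      using cvx u w uw unfolding convex_on_def by blast
    have h1: "u * (\<phi> (fst p) - \<phi> xb) \<le> u * snd p" using p u by (intro mult_left_mono) (auto simp: A_def)
    have h2: "w * (\<phi> (fst q) - \<phi> xb) \<le> w * snd q" using q w by (intro mult_left_mono) (auto simp: A_def)
    have strict: "u * (\<phi> (fst p) - \<phi> xb) < u * snd p \<or> w * (\<phi> (fst q) - \<phi> xb) < w * snd q"
    proof (cases "u = 0")
      case True then have "w = 1" using uw by simp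
      then show ?thesis using q by (simp add: A_def)
    next
      case False then have "u > 0" using u by simp
      then show ?thesis using p by (simp add: A_def)
    qed
    have "\<phi> (u *\<^sub>R fst p + w *\<^sub>R fst q) - \<phi> xb < u * snd p + w * snd q"
    proof -
      have "\<phi> xb = u * \<phi> xb + w * \<phi> xb" using uw by (simp add: algebra_simps flip: distrib_right)
      thus ?thesis using cv h1 h2 strict by (simp add: algebra_simps) linarith
    qed
    thus "u *\<^sub>R p + w *\<^sub>R q \<in> A" by (simp add: A_def)
  qed
  have cB: "convex B" unfolding convex_def
  proof (intro ballI allI impI)
    fix p q :: "'a \<times> real" and u w :: real
    assume p: "p \<in> B" and q: "q \<in> B" and u: "0 \<le> u" and w: "0 \<le> w" and uw: "u + w = 1"
    have "u *\<^sub>R fst p + w *\<^sub>R fst q \<in> C" using C p q u w uw by (auto simp: B_def convex_def)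
    moreover have "u * snd p + w * snd q \<le> - (b \<bullet> (u *\<^sub>R fst p + w *\<^sub>R fst q - xb))"
    proof -
      have "u * snd p \<le> u * (- (b \<bullet> (fst p - xb)))" using p u by (intro mult_left_mono) (auto simp: B_def)
      moreover have "w * snd q \<le> w * (- (b \<bullet> (fst q - xb)))" using q w by (intro mult_left_mono) (auto simp: B_def)
      moreover have "u *\<^sub>R fst p + w *\<^sub>R fst q - xb = u *\<^sub>R (fst p - xb) + w *\<^sub>R (fst q - xb)"
        using uw by (simp add: algebra_simps flip: scaleR_add_left)
      moreover have "u * (b \<bullet> xb) + w * (b \<bullet> xb) = b \<bullet> xb" using uw by (metis distrib_right mult_1)
      ultimately show ?thesis by (simp add: inner_add_right inner_diff_right algebra_simps)
    qed
    ultimately show "u *\<^sub>R p + w *\<^sub>R q \<in> B" by (simp add: B_def)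
  qed
  have A1: "(xb, 1) \<in> A" by (simp add: A_def)
  have B0: "(xb, 0) \<in> B" using xb by (simp add: B_def)
  have dis: "A \<inter> B = {}"
  proof (rule ccontr)
    assume "A \<inter> B \<noteq> {}"
    then obtain z t where "(z, t) \<in> A" "(z, t) \<in> B" by auto
    hence "\<phi> z - \<phi> xb < t" "z \<in> C" "t \<le> - (b \<bullet> (z - xb))" by (auto simp: A_def B_def)
    thus False using opt by force
  qed
  obtain aa c where aa: "aa \<noteq> 0" and HA: "\<forall>p\<in>A. aa \<bullet> p \<le> c" and HB: "\<forall>p\<in>B. c \<le> aa \<bullet> p"
    using separating_hyperplane_sets[OF cA cB _ _ dis] A1 B0 by blast
  obtain a s where as: "aa = (a, s)" by (cases aa)
  have HA': "a \<bullet> z + s * t \<le> c" if "\<phi> z - \<phi> xb < t" for z t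
    using HA that by (auto simp: A_def as)
  have HB': "c \<le> a \<bullet> z + s * t" if "z \<in> C" "t \<le> - (b \<bullet> (z - xb))" for z t
    using HB that by (auto simp: B_def as)
  have cxb: "c \<le> a \<bullet> xb" using HB'[OF xb, of 0] by simp
  have s0: "s \<le> 0"
  proof (rule ccontr)
    assume "\<not> s \<le> 0" hence sp: "s > 0" by simp
    define t where "t = (\<bar>c\<bar> + \<bar>a \<bullet> xb\<bar> + 1) / s"
    have "a \<bullet> xb + s * t \<le> c" using HA'[of xb t] sp by (simp add: t_def)
    moreover have "s * t = \<bar>c\<bar> + \<bar>a \<bullet> xb\<bar> + 1" using sp by (simp add: t_def)
    ultimately show False by linarith
  qed
  have sn: "s \<noteq> 0"
  proof
    assume s: "s = 0"
    hence a: "a \<noteq> 0" using aa as by (auto simp: zero_prod_def)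
    have "a \<bullet> (xb + a) \<le> c" using HA'[of "xb + a" "\<phi> (xb + a) - \<phi> xb + 1"] s by simp
    hence "a \<bullet> a \<le> 0" using cxb by (simp add: inner_add_right)
    thus False using a inner_gt_zero_iff[of a] by linarith
  qed
  hence sneg: "s < 0" using s0 by simp
  define a' where "a' = (1 / (- s)) *\<^sub>R a"
  have sub: "\<phi> xb + a' \<bullet> (y - xb) \<le> \<phi> y" for y
  proof -
    have "a \<bullet> y + s * (\<phi> y - \<phi> xb) \<le> c + e" if e: "e > 0" for e
    proof -
      have "a \<bullet> y + s * (\<phi> y - \<phi> xb + e / (- s)) \<le> c"
        using HA'[of y "\<phi> y - \<phi> xb + e / (- s)"] e sneg by (simp add: divide_pos_neg)
      thus ?thesis using sneg by (simp add: algebra_simps)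
    qed
    hence "a \<bullet> y + s * (\<phi> y - \<phi> xb) \<le> c" by (rule field_le_epsilon)
    hence "a \<bullet> (y - xb) \<le> (- s) * (\<phi> y - \<phi> xb)" using cxb by (simp add: inner_diff_right algebra_simps)
    hence "(1 / (- s)) * (a \<bullet> (y - xb)) \<le> \<phi> y - \<phi> xb" using sneg by (simp add: field_simps)
    thus ?thesis by (simp add: a'_def)
  qed
  have cxb2: "a \<bullet> xb \<le> c"
  proof -
    have "a \<bullet> xb \<le> c + e" if e: "e > 0" for e
    proof -
      have "a \<bullet> xb + s * (e / (- s)) \<le> c" using HA'[of xb "e / (- s)"] e sneg by (simp add: divide_pos_neg)
      thus ?thesis using sneg by simp
    qed
    thus ?thesis by (rule field_le_epsilon)
  qed
  have nc: "0 \<le> (a' + b) \<bullet> (z - xb)" if z: "z \<in> C" for z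
  proof -
    have "c \<le> a \<bullet> z + s * (- (b \<bullet> (z - xb)))" using HB'[OF z order_refl] .
    moreover have "s * (b \<bullet> xb - b \<bullet> z) = - (s * (b \<bullet> z - b \<bullet> xb))" by (simp add: algebra_simps)
    ultimately have "0 \<le> a \<bullet> (z - xb) - s * (b \<bullet> (z - xb))" using cxb2 by (simp add: inner_diff_right)
    hence "0 \<le> (1 / (- s)) * (a \<bullet> (z - xb) - s * (b \<bullet> (z - xb)))" using sneg by (intro mult_nonneg_nonneg) auto
    also have "\<dots> = (a' + b) \<bullet> (z - xb)" using sneg by (simp add: a'_def inner_add_left inner_diff_left field_simps)
    finally show ?thesis .
  qed
  show ?thesis using sub nc by blast
qed

lemma sym_inner:
  fixes Q :: "real^'n^'n"
  assumes "transpose Q = Q"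
  shows "a \<bullet> (Q *v b) = b \<bullet> (Q *v a)"
proof -
  have "a \<bullet> (Q *v b) = (a v* Q) \<bullet> b" by (simp add: dot_lmul_matrix)
  also have "a v* Q = transpose Q *v a" by simp
  finally show ?thesis using assms by (simp add: inner_commute)
qed

lemma quad_expand:
  fixes Q :: "real^'n^'n"
  assumes "transpose Q = Q"
  shows "(w + t *\<^sub>R h) \<bullet> (Q *v (w + t *\<^sub>R h)) = w \<bullet> (Q *v w) + 2 * t * ((Q *v w) \<bullet> h) + t\<^sup>2 * (h \<bullet> (Q *v h))"
proof -
  have s: "w \<bullet> (Q *v h) = h \<bullet> (Q *v w)" by (rule sym_inner[OF assms])
  show ?thesis
    by (simp add: matrix_vector_right_distrib matrix_vector_mult_scaleR inner_add_left inner_add_right s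
        inner_commute power2_eq_square algebra_simps)
qed

lemma small_t:
  fixes X c :: real
  assumes "\<And>t. 0 < t \<Longrightarrow> t \<le> 1 \<Longrightarrow> 0 \<le> X + t * c"
  shows "0 \<le> X"
proof (rule ccontr)
  assume X: "\<not> 0 \<le> X"
  define t where "t = min 1 ((- X) / (2 * (\<bar>c\<bar> + 1)))"
  have d: "(- X) / (2 * (\<bar>c\<bar> + 1)) > 0" using X by (intro divide_pos_pos) auto
  have t: "0 < t" "t \<le> 1" using d by (auto simp: t_def)
  have "t * c \<le> t * \<bar>c\<bar>" using t by (simp add: mult_left_mono)
  also have "\<dots> \<le> (- X) / (2 * (\<bar>c\<bar> + 1)) * \<bar>c\<bar>" by (intro mult_right_mono) (auto simp: t_def)
  also have "\<dots> \<le> (- X) / 2"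
  proof -
    have "\<bar>c\<bar> / (\<bar>c\<bar> + 1) \<le> 1" by simp
    hence "(- X) * (\<bar>c\<bar> / (\<bar>c\<bar> + 1)) \<le> (- X) * 1" using X by (intro mult_left_mono) auto
    thus ?thesis by (simp add: field_simps)
  qed
  finally have "X + t * c < 0" using X by linarith
  thus False using assms[OF t] by linarith
qed

lemma first_order:
  fixes Q :: "real^'n^'n" and \<phi> :: "real^'n \<Rightarrow> real"
  assumes C: "convex C" and xb: "xb \<in> C" and cvx: "convex_on UNIV \<phi>" and sym: "transpose Q = Q"
    and opt: "\<forall>z\<in>C. \<xi> \<bullet> (xb - x) + 1/2 * ((xb - x) \<bullet> (Q *v (xb - x))) + \<phi> xb
                    \<le> \<xi> \<bullet> (z - x) + 1/2 * ((z - x) \<bullet> (Q *v (z - x))) + \<phi> z"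
  shows "\<forall>z\<in>C. \<phi> xb \<le> (\<xi> + Q *v (xb - x)) \<bullet> (z - xb) + \<phi> z"
proof
  fix z assume z: "z \<in> C"
  define h where "h = z - xb"
  define w where "w = xb - x"
  have "0 \<le> ((\<xi> + Q *v w) \<bullet> h + \<phi> z - \<phi> xb) + t * (1/2 * (h \<bullet> (Q *v h)))" if t: "0 < t" "t \<le> 1" for t
  proof -
    define zt where "zt = xb + t *\<^sub>R h"
    have zt: "zt = (1 - t) *\<^sub>R xb + t *\<^sub>R z" by (simp add: zt_def h_def algebra_simps)
    hence ztC: "zt \<in> C" using C xb z t by (simp add: convex_def)
    have cz: "\<phi> zt \<le> (1 - t) * \<phi> xb + t * \<phi> z" using convex_onD[OF cvx, of t xb z] t zt by simp
    have "zt - x = w + t *\<^sub>R h" by (simp add: zt_def w_def algebra_simps)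
    hence q: "(zt - x) \<bullet> (Q *v (zt - x)) = w \<bullet> (Q *v w) + 2 * t * ((Q *v w) \<bullet> h) + t\<^sup>2 * (h \<bullet> (Q *v h))"
      using quad_expand[OF sym] by simp
    have o: "\<xi> \<bullet> w + 1/2 * (w \<bullet> (Q *v w)) + \<phi> xb \<le> \<xi> \<bullet> (zt - x) + 1/2 * ((zt - x) \<bullet> (Q *v (zt - x))) + \<phi> zt"
      using opt ztC by (simp add: w_def)
    have xz: "\<xi> \<bullet> (zt - x) = \<xi> \<bullet> w + t * (\<xi> \<bullet> h)" by (simp add: zt_def w_def inner_add_right inner_diff_right algebra_simps)
    have "0 \<le> t * (\<xi> \<bullet> h) + t * ((Q *v w) \<bullet> h) + t\<^sup>2 / 2 * (h \<bullet> (Q *v h)) + (\<phi> zt - \<phi> xb)"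
      using o q xz by (simp add: algebra_simps)
    also have "\<phi> zt - \<phi> xb \<le> t * (\<phi> z - \<phi> xb)" using cz by (simp add: algebra_simps)
    finally have "0 \<le> t * ((\<xi> + Q *v w) \<bullet> h + \<phi> z - \<phi> xb + t * (1/2 * (h \<bullet> (Q *v h))))"
      by (simp add: inner_add_left algebra_simps power2_eq_square)
    thus ?thesis using t by (simp add: zero_le_mult_iff)
  qed
  hence "0 \<le> (\<xi> + Q *v w) \<bullet> h + \<phi> z - \<phi> xb" by (rule small_t)
  thus "\<phi> xb \<le> (\<xi> + Q *v (xb - x)) \<bullet> (z - xb) + \<phi> z" by (simp add: h_def w_def)
qed

lemma Gfun_comp:
  "Gfun g z s V L $ i = g s $ i + column i V \<bullet> (z - s) + (norm (z - s))\<^sup>2 / 2 * L $ i"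
  by (simp add: Gfun_def vector_matrix_mult_def column_def inner_vec_def mult.commute)

lemma Mv_inner:
  fixes V :: "real^'m^'n"
  shows "(V *v lam) \<bullet> d = (\<Sum>i\<in>UNIV. lam $ i * (column i V \<bullet> d))"
proof -
  have "(V *v lam) \<bullet> d = (\<Sum>j\<in>UNIV. (\<Sum>i\<in>UNIV. V $ j $ i * lam $ i) * d $ j)"
    by (simp add: matrix_vector_mult_def inner_vec_def)
  also have "\<dots> = (\<Sum>j\<in>UNIV. \<Sum>i\<in>UNIV. lam $ i * (V $ j $ i * d $ j))"
    by (simp add: sum_distrib_right sum_distrib_left algebra_simps)
  also have "\<dots> = (\<Sum>i\<in>UNIV. \<Sum>j\<in>UNIV. lam $ i * (V $ j $ i * d $ j))" by (rule sum.swap)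
  also have "\<dots> = (\<Sum>i\<in>UNIV. lam $ i * (column i V \<bullet> d))"
    by (simp add: column_def inner_vec_def sum_distrib_left)
  finally show ?thesis .
qed

lemma Mv_sum:
  fixes V :: "real^'m^'n"
  shows "V *v lam = (\<Sum>i\<in>UNIV. lam $ i *\<^sub>R column i V)"
  by (simp add: vec_eq_iff matrix_vector_mult_def column_def sum_component mult.commute)

lemma grad_ineq:
  fixes V :: "real^'m^'n" and lam L :: "real^'m"
  assumes lam: "\<forall>i. 0 \<le> lam $ i" and L: "\<forall>i. 0 \<le> L $ i"
  shows "(V *v lam + (L \<bullet> lam) *\<^sub>R (y - s)) \<bullet> (z - y) \<le> lam \<bullet> (Gfun g z s V L - Gfun g y s V L)"
proof -
  have q: "(y - s) \<bullet> (z - y) \<le> ((norm (z - s))\<^sup>2 - (norm (y - s))\<^sup>2) / 2"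
  proof -
    have e: "(a + b) \<bullet> (a + b) = a \<bullet> a + 2 * (a \<bullet> b) + b \<bullet> b" for a b :: "real^'n"
      by (simp add: inner_add_left inner_add_right inner_commute)
    have "z - s = (y - s) + (z - y)" by simp
    hence "(z - s) \<bullet> (z - s) = (y - s) \<bullet> (y - s) + 2 * ((y - s) \<bullet> (z - y)) + (z - y) \<bullet> (z - y)"
      using e[of "y - s" "z - y"] by simp
    hence "(norm (z - s))\<^sup>2 = (norm (y - s))\<^sup>2 + 2 * ((y - s) \<bullet> (z - y)) + (norm (z - y))\<^sup>2"
      by (simp add: dot_square_norm)
    thus ?thesis by simp
  qed
  have "(V *v lam + (L \<bullet> lam) *\<^sub>R (y - s)) \<bullet> (z - y)
      = (\<Sum>i\<in>UNIV. lam $ i * (column i V \<bullet> (z - y))) + (\<Sum>i\<in>UNIV. L $ i * lam $ i) * ((y - s) \<bullet> (z - y))"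
  proof -
    have Ll: "L \<bullet> lam = (\<Sum>i\<in>UNIV. L $ i * lam $ i)" by (simp add: inner_vec_def)
    show ?thesis by (simp only: inner_add_left Mv_inner Ll inner_scaleR_left)
  qed
  also have "\<dots> = (\<Sum>i\<in>UNIV. lam $ i * (column i V \<bullet> (z - y) + L $ i * ((y - s) \<bullet> (z - y))))"
    by (simp add: distrib_left sum.distrib sum_distrib_right sum_distrib_left mult.commute mult.left_commute mult.assoc)
  also have "\<dots> \<le> (\<Sum>i\<in>UNIV. lam $ i * (column i V \<bullet> (z - y) + L $ i * (((norm (z - s))\<^sup>2 - (norm (y - s))\<^sup>2) / 2)))"
    using lam L q by (intro sum_mono mult_left_mono add_left_mono) auto
  also have "\<dots> = lam \<bullet> (Gfun g z s V L - Gfun g y s V L)"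
  proof -
    have d: "Gfun g z s V L $ i - Gfun g y s V L $ i = column i V \<bullet> (z - y) + L $ i * (((norm (z - s))\<^sup>2 - (norm (y - s))\<^sup>2) / 2)" for i
    proof -
      have "column i V \<bullet> (z - s) - column i V \<bullet> (y - s) = column i V \<bullet> (z - y)"
        by (simp add: inner_diff_right)
      thus ?thesis by (simp add: Gfun_comp algebra_simps diff_divide_distrib)
    qed
    have "lam \<bullet> (Gfun g z s V L - Gfun g y s V L) = (\<Sum>i\<in>UNIV. lam $ i * (Gfun g z s V L $ i - Gfun g y s V L $ i))"
      by (simp add: inner_vec_def)
    thus ?thesis by (simp only: d)
  qed
  finally show ?thesis .
qed

lemma psd_cs:
  fixes Q :: "real^'n^'n"
  assumes sym: "transpose Q = Q" and psd: "\<forall>d. 0 \<le> d \<bullet> (Q *v d)"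
  shows "(a \<bullet> (Q *v b))\<^sup>2 \<le> (a \<bullet> (Q *v a)) * (b \<bullet> (Q *v b))"
proof -
  define A where "A = a \<bullet> (Q *v a)"
  define B where "B = a \<bullet> (Q *v b)"
  define C where "C = b \<bullet> (Q *v b)"
  have ba: "b \<bullet> (Q *v a) = B" using sym_inner[OF sym] by (simp add: B_def)
  have quad: "0 \<le> A + 2 * t * B + t\<^sup>2 * C" for t
  proof -
    have "0 \<le> (a + t *\<^sub>R b) \<bullet> (Q *v (a + t *\<^sub>R b))" using psd by blast
    also have "\<dots> = A + 2 * t * B + t\<^sup>2 * C"
      using quad_expand[OF sym, of a t b] sym_inner[OF sym, of a b] by (simp add: A_def B_def C_def inner_commute)
    finally show ?thesis .
  qed
  have C0: "0 \<le> C" using psd by (simp add: C_def)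
  show ?thesis
  proof (cases "C = 0")
    case True
    have "B = 0"
    proof (rule ccontr)
      assume Bn: "B \<noteq> 0"
      have "0 \<le> A + 2 * (- (\<bar>A\<bar> + 1) / (2 * B)) * B" using quad[of "- (\<bar>A\<bar> + 1) / (2 * B)"] True by simp
      also have "\<dots> = A - (\<bar>A\<bar> + 1)" using Bn by (simp add: field_simps)
      finally show False by linarith
    qed
    thus ?thesis using True by (simp add: A_def B_def C_def)
  next
    case False
    hence Cp: "C > 0" using C0 by simp
    have "0 \<le> A + 2 * (- B / C) * B + (- B / C)\<^sup>2 * C" by (rule quad)
    also have "\<dots> = A - B\<^sup>2 / C" using Cp by (simp add: field_simps power2_eq_square)
    finally have "B\<^sup>2 / C \<le> A" by simp
    hence "B\<^sup>2 \<le> A * C" using Cp by (simp add: field_simps)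
    thus ?thesis by (simp add: A_def B_def C_def)
  qed
qed

lemma psd_bound:
  fixes Q :: "real^'n^'n"
  assumes sym: "transpose Q = Q" and psd: "\<forall>d. 0 \<le> d \<bullet> (Q *v d)"
    and up: "\<forall>d. d \<bullet> (Q *v d) \<le> \<Lambda> * (norm d)\<^sup>2" and L0: "0 \<le> \<Lambda>"
  shows "norm (Q *v d) \<le> \<Lambda> * norm d"
proof (cases "Q *v d = 0")
  case True then show ?thesis using L0 by simp
next
  case False
  define w where "w = Q *v d"
  have nw: "norm w > 0" using False by (simp add: w_def)
  have "(w \<bullet> (Q *v d))\<^sup>2 \<le> (w \<bullet> (Q *v w)) * (d \<bullet> (Q *v d))" by (rule psd_cs[OF sym psd])
  also have "\<dots> \<le> (\<Lambda> * (norm w)\<^sup>2) * (\<Lambda> * (norm d)\<^sup>2)"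
    using up psd L0 by (intro mult_mono) auto
  finally have "((norm w)\<^sup>2)\<^sup>2 \<le> (\<Lambda> * (norm w)\<^sup>2) * (\<Lambda> * (norm d)\<^sup>2)"
    by (simp add: w_def power2_norm_eq_inner)
  hence "(norm w)\<^sup>2 * (norm w)\<^sup>2 \<le> (norm w)\<^sup>2 * ((\<Lambda> * norm d)\<^sup>2)"
    by (simp add: power2_eq_square algebra_simps)
  moreover have "(norm w)\<^sup>2 > 0" using nw by simp
  ultimately have "(norm w)\<^sup>2 \<le> (\<Lambda> * norm d)\<^sup>2" using mult_le_cancel_left_pos by blast
  moreover have "0 \<le> \<Lambda> * norm d" using L0 by simp
  ultimately have "norm w \<le> \<Lambda> * norm d" using power2_le_imp_le by blast
  thus ?thesis by (simp add: w_def)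
qed

lemma matrix_norm_entries:
  fixes A :: "real^'m^'n"
  assumes "\<forall>i j. \<bar>A $ i $ j\<bar> \<le> c"
  shows "norm A \<le> real CARD('n) * (real CARD('m) * c)"
proof -
  have "norm A \<le> (\<Sum>i\<in>UNIV. norm (A $ i))"
    unfolding norm_vec_def by (rule L2_set_le_sum) auto
  also have "\<dots> \<le> (\<Sum>i\<in>(UNIV::'n set). real CARD('m) * c)"
  proof (rule sum_mono)
    fix i
    have "norm (A $ i) \<le> (\<Sum>j\<in>UNIV. \<bar>A $ i $ j\<bar>)" by (rule norm_le_l1_cart)
    also have "\<dots> \<le> (\<Sum>j\<in>(UNIV::'m set). c)" using assms by (intro sum_mono) auto
    finally show "norm (A $ i) \<le> real CARD('m) * c" by simp
  qed
  finally show ?thesis by simp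
qed

lemma Mv_tendsto:
  fixes V :: "nat \<Rightarrow> real^'m^'n"
  assumes "V \<longlonglongrightarrow> V0" "l \<longlonglongrightarrow> l0"
  shows "(\<lambda>k. V k *v l k) \<longlonglongrightarrow> V0 *v l0"
  unfolding matrix_vector_mult_def
  by (intro tendsto_vec_lambda tendsto_sum tendsto_mult tendsto_vec_nth assms)

lemma column_tendsto:
  fixes V :: "nat \<Rightarrow> real^'m^'n"
  assumes "V \<longlonglongrightarrow> V0"
  shows "(\<lambda>k. column i (V k)) \<longlonglongrightarrow> column i V0"
  unfolding column_def
  by (intro tendsto_vec_lambda tendsto_vec_nth assms)

locale imba =
  fixes g0 :: "real^'n::finite \<Rightarrow> real"
    and g :: "real^'n \<Rightarrow> real^'m::finite"
    and \<phi> :: "real^'n \<Rightarrow> real"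
    and Oset :: "(real^'n) set"
    and \<mu>min \<mu>max Lmin Lmax M \<beta>C \<beta>S \<alpha> \<tau> :: real
    and x \<xi> :: "nat \<Rightarrow> real^'n"
    and V :: "nat \<Rightarrow> real^'m^'n"
    and jk :: "nat \<Rightarrow> nat"
    and \<mu> :: "nat \<Rightarrow> nat \<Rightarrow> real"
    and Q :: "nat \<Rightarrow> nat \<Rightarrow> real^'n^'n"
    and L :: "nat \<Rightarrow> nat \<Rightarrow> real^'m"
    and y v xbar :: "nat \<Rightarrow> nat \<Rightarrow> real^'n"
    and lam :: "nat \<Rightarrow> nat \<Rightarrow> real^'m"
  assumes O_open: "open Oset" and O_convex: "convex Oset"
    and Gamma_sub: "feasible g \<subseteq> Oset" and Gamma_ne: "feasible g \<noteq> {}"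
    and g0_reg: "\<forall>z\<in>Oset. loc_lipschitz_at g0 z \<and> upper_C2_at g0 z"
    and g_reg: "\<forall>i z. loc_lipschitz_at (\<lambda>w. g w $ i) z \<and> upper_C2_at (\<lambda>w. g w $ i) z"
    and phi_convex: "convex_on UNIV \<phi>"
    and F_bdd: "\<exists>c. \<forall>z\<in>feasible g. c \<le> g0 z + \<phi> z"
    and params: "0 < \<mu>min" "\<mu>min \<le> \<mu>max" "0 < Lmin" "Lmin \<le> Lmax"
                "0 < M" "0 < \<beta>C" "0 < \<beta>S" "0 < \<alpha>" "1 < \<tau>"
    and x0: "x 0 \<in> feasible g"
    and xi_sub: "\<forall>k. \<xi> k \<in> limiting_subdiff g0 (x k)"
    and V_sub: "\<forall>k. V k \<in> subdiff_vec g (x k)"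
    and mu0: "\<forall>k. \<mu>min \<le> \<mu> k 0 \<and> \<mu> k 0 \<le> \<mu>max"
    and L0: "\<forall>k i. Lmin \<le> L k 0 $ i \<and> L k 0 $ i \<le> Lmax"
    and Q_bnd: "\<forall>k j. j \<le> jk k \<longrightarrow> transpose (Q k j) = Q k j \<and>
                  (\<forall>d. \<mu> k j * (norm d)\<^sup>2 \<le> d \<bullet> (Q k j *v d) \<and>
                       d \<bullet> (Q k j *v d) \<le> (\<mu> k j + M) * (norm d)\<^sup>2)"
    and xbar_min: "\<forall>k j. j \<le> jk k \<longrightarrow>
                  Gfun g (xbar k j) (x k) (V k) (L k j) \<in> nonpos_orthant \<and>
                  (\<forall>z. Gfun g z (x k) (V k) (L k j) \<in> nonpos_orthant \<longrightarrow>
                       Fmodel g0 \<phi> (x k) (\<xi> k) (Q k j) (xbar k j) \<le> Fmodel g0 \<phi> (x k) (\<xi> k) (Q k j) z)"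
    and inexact: "\<forall>k j. j \<le> jk k \<longrightarrow>
                  Fmodel g0 \<phi> (x k) (\<xi> k) (Q k j) (y k j) \<le> Fmodel g0 \<phi> (x k) (\<xi> k) (Q k j) (x k) \<and>
                  v k j \<in> limiting_subdiff \<phi> (y k j) \<and>
                  (\<forall>i. 0 \<le> lam k j $ i) \<and>
                  max 0 (- (lam k j \<bullet> Gfun g (y k j) (x k) (V k) (L k j))) +
                    infnorm (\<chi> i. max 0 (Gfun g (y k j) (x k) (V k) (L k j) $ i))
                    \<le> \<beta>C / 2 * (norm (y k j - x k))\<^sup>2 \<and>
                  norm (\<xi> k + Q k j *v (y k j - x k) + v k j + V k *v lam k j
                        + (L k j \<bullet> lam k j) *\<^sub>R (y k j - x k))
                    \<le> \<beta>S * norm (y k j - x k)"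
    and reject: "\<forall>k j. j < jk k \<longrightarrow> \<not> (g (y k j) \<in> nonpos_orthant \<and>
                  Fobj g0 g \<phi> (y k j) \<le> Fobj g0 g \<phi> (x k) - ereal (\<alpha> / 2 * (norm (y k j - x k))\<^sup>2))"
    and accept: "\<forall>k. g (y k (jk k)) \<in> nonpos_orthant \<and>
                  Fobj g0 g \<phi> (y k (jk k)) \<le> Fobj g0 g \<phi> (x k) - ereal (\<alpha> / 2 * (norm (y k (jk k) - x k))\<^sup>2)"
    and update: "\<forall>k j. j < jk k \<longrightarrow>
                  (g (y k j) \<notin> nonpos_orthant \<longrightarrow> L k (Suc j) = \<tau> *\<^sub>R L k j \<and> \<mu> k (Suc j) = \<mu> k j) \<and>
                  (g (y k j) \<in> nonpos_orthant \<longrightarrow> L k (Suc j) = L k j \<and> \<mu> k (Suc j) = \<tau> * \<mu> k j)"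
    and x_next: "\<forall>k. x (Suc k) = y k (jk k)"
    and A2: "\<forall>k j. j \<le> jk k \<longrightarrow>
                  metric_subregular (\<lambda>z. {Gfun g z (x k) (V k) (L k j) - w | w. w \<in> nonpos_orthant})
                    (xbar k j) 0"
    and A3: "bounded (range x)"
    and A4: "\<forall>p. cluster_point (\<lambda>k. ((x k, L k (jk k), V k, \<xi> k, Q k (jk k)), xbar k (jk k))) p
                  \<longrightarrow> partial_BMP g (fst p) (snd p)"

begin

definition "fx k = g0 (x k) + \<phi> (x k)"
definition "dd k = norm (x (Suc k) - x k)"

lemma g_cont: "isCont g z"
proof -
  have "\<And>i. isCont (\<lambda>w. g w $ i) z" using g_reg loclip_isCont by blast
  hence "\<And>i. ((\<lambda>w. g w $ i) \<longlongrightarrow> g z $ i) (at z)" by (simp add: isCont_def)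
  hence "(g \<longlongrightarrow> g z) (at z)" by (rule vec_tendstoI)
  thus ?thesis by (simp add: isCont_def)
qed

lemma feas_closed: "closed (feasible g)"
proof -
  have "feasible g = g -` nonpos_orthant" by (auto simp: feasible_def)
  moreover have "\<And>z. continuous (at z) g" using g_cont by simp
  ultimately show ?thesis using continuous_closed_vimage[OF closed_orth] by metis
qed

lemma feas_x: "x k \<in> feasible g"
proof (induction k)
  case 0 show ?case by (rule x0)
next
  case (Suc k) show ?case using accept x_next by (simp add: feasible_def)
qed

lemma Fobj_x: "Fobj g0 g \<phi> (x k) = ereal (fx k)"
  using feas_x by (simp add: Fobj_def fx_def feasible_def)

lemma descent: "fx (Suc k) \<le> fx k - \<alpha> / 2 * (dd k)\<^sup>2"
proof -
  have "Fobj g0 g \<phi> (x (Suc k)) \<le> Fobj g0 g \<phi> (x k) - ereal (\<alpha> / 2 * (dd k)\<^sup>2)"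
    using accept x_next by (simp add: dd_def)
  thus ?thesis by (simp add: Fobj_x)
qed

lemma fx_conv: "\<exists>c. fx \<longlonglongrightarrow> c"
proof -
  obtain c0 where c0: "\<forall>z\<in>feasible g. c0 \<le> g0 z + \<phi> z" using F_bdd by blast
  have "\<forall>i. c0 \<le> fx i" using c0 feas_x by (simp add: fx_def)
  moreover have "decseq fx"
  proof (rule decseq_SucI)
    fix k have "0 \<le> \<alpha> / 2 * (dd k)\<^sup>2" using params by simp
    thus "fx (Suc k) \<le> fx k" using descent[of k] by linarith
  qed
  ultimately show ?thesis using decseq_convergent by metis
qed

lemma dd_zero: "dd \<longlonglongrightarrow> 0"
proof -
  obtain c where c: "fx \<longlonglongrightarrow> c" using fx_conv by blast
  have "(\<lambda>k. 2 / \<alpha> * (fx k - fx (Suc k))) \<longlonglongrightarrow> 2 / \<alpha> * (c - c)"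
    by (intro tendsto_intros c LIMSEQ_Suc)
  hence l: "(\<lambda>k. 2 / \<alpha> * (fx k - fx (Suc k))) \<longlonglongrightarrow> 0" by simp
  have h: "\<forall>k. norm ((dd k)\<^sup>2) \<le> 2 / \<alpha> * (fx k - fx (Suc k))"
  proof
    fix k
    have "\<alpha> / 2 * (dd k)\<^sup>2 \<le> fx k - fx (Suc k)" using descent[of k] by linarith
    hence "(dd k)\<^sup>2 \<le> 2 / \<alpha> * (fx k - fx (Suc k))" using params by (simp add: field_simps)
    thus "norm ((dd k)\<^sup>2) \<le> 2 / \<alpha> * (fx k - fx (Suc k))" by simp
  qed
  have "(\<lambda>k. (dd k)\<^sup>2) \<longlonglongrightarrow> 0" by (rule Lim_null_comparison[OF always_eventually[OF h] l])
  hence "(\<lambda>k. sqrt ((dd k)\<^sup>2)) \<longlonglongrightarrow> sqrt 0" by (rule tendsto_real_sqrt)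
  thus ?thesis by (simp add: dd_def[abs_def])
qed


lemma mu_pos_step: "j < jk k \<Longrightarrow> \<mu> k j \<le> \<mu> k (Suc j) \<or> \<mu> k j \<le> 0"
proof -
  assume j: "j < jk k"
  show ?thesis
  proof (cases "g (y k j) \<in> nonpos_orthant")
    case True
    hence e: "\<mu> k (Suc j) = \<tau> * \<mu> k j" using update j by blast
    show ?thesis
    proof (cases "\<mu> k j \<le> 0")
      case False
      hence "\<mu> k j \<le> \<tau> * \<mu> k j" using params by (simp add: mult_le_cancel_right1 less_imp_le)
      thus ?thesis using e by simp
    qed simp
  next
    case False thus ?thesis using update j by simp
  qed
qed

lemma mu_ge: "j \<le> jk k \<Longrightarrow> \<mu>min \<le> \<mu> k j"
proof (induction j)
  case 0 show ?case using mu0 by blast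
next
  case (Suc j)
  hence IH: "\<mu>min \<le> \<mu> k j" and j: "j < jk k" by auto
  thus ?case using mu_pos_step[OF j] params by auto
qed

lemma mu_gt0: "j \<le> jk k \<Longrightarrow> 0 < \<mu> k j"
  using mu_ge params by (meson less_le_trans)

definition "Rx = (SOME R. 0 \<le> R \<and> (\<forall>k. norm (x k) \<le> R))"

lemma Rx: "0 \<le> Rx" "norm (x k) \<le> Rx"
proof -
  obtain R0 where "\<forall>k. norm (x k) \<le> R0" using A3 unfolding bounded_iff by auto
  hence "\<exists>R. 0 \<le> R \<and> (\<forall>k. norm (x k) \<le> R)" by (intro exI[of _ "max R0 0"]) (auto intro: order_trans)
  from someI_ex[OF this] show "0 \<le> Rx" "norm (x k) \<le> Rx" unfolding Rx_def by auto
qed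

lemma phi_cont: "continuous_on UNIV \<phi>"
  using convex_on_continuous[OF open_UNIV phi_convex] .

lemma phi_bound_ex: "\<exists>B. 0 \<le> B \<and> (\<forall>z\<in>cball 0 r. \<bar>\<phi> z\<bar> \<le> B)"
proof -
  have "compact (\<phi> ` cball 0 r)"
    by (rule compact_continuous_image[OF continuous_on_subset[OF phi_cont] compact_cball]) simp
  then obtain B where "\<forall>t\<in>\<phi> ` cball 0 r. norm t \<le> B" using compact_imp_bounded bounded_iff by metis
  thus ?thesis by (intro exI[of _ "max B 0"]) auto
qed

definition "Bphi r = (SOME B. 0 \<le> B \<and> (\<forall>z\<in>cball 0 r. \<bar>\<phi> z\<bar> \<le> B))"

lemma Bphi: "0 \<le> Bphi r" "norm z \<le> r \<Longrightarrow> \<bar>\<phi> z\<bar> \<le> Bphi r"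
  using someI_ex[OF phi_bound_ex[of r]] unfolding Bphi_def by auto

lemma three_point:
  assumes "\<bar>\<phi> xx\<bar> \<le> B" "\<And>u. norm u = 1 \<Longrightarrow> \<bar>\<phi> (xx - u)\<bar> \<le> B"
  shows "\<phi> z - \<phi> xx \<ge> - 2 * B * norm (z - xx)"
proof (cases "z = xx")
  case True then show ?thesis by simp
next
  case False
  define n where "n = norm (z - xx)"
  have n: "n > 0" using False by (simp add: n_def)
  define u where "u = (1 / n) *\<^sub>R (z - xx)"
  have nu: "norm u = 1" using n by (simp add: u_def n_def)
  define t where "t = 1 / (1 + n)"
  have t: "0 \<le> t" "t \<le> 1" using n by (auto simp: t_def)
  have "(1 - t) *\<^sub>R (xx - u) + t *\<^sub>R z = xx"
  proof -
    have a1: "(1 + n) * (1 - t) = n" using n by (simp add: t_def field_simps)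
    have a2: "(1 + n) * t = 1" using n by (simp add: t_def field_simps)
    have "(1 + n) *\<^sub>R ((1 - t) *\<^sub>R (xx - u) + t *\<^sub>R z) = ((1 + n) * (1 - t)) *\<^sub>R (xx - u) + ((1 + n) * t) *\<^sub>R z"
      by (simp add: scaleR_add_right)
    also have "\<dots> = n *\<^sub>R (xx - u) + z" by (simp only: a1 a2 scaleR_one)
    finally have "(1 + n) *\<^sub>R ((1 - t) *\<^sub>R (xx - u) + t *\<^sub>R z) = n *\<^sub>R (xx - u) + z" .
    also have "\<dots> = (1 + n) *\<^sub>R xx" using n by (simp add: u_def algebra_simps)
    finally show ?thesis using n by simp
  qed
  hence "\<phi> xx \<le> (1 - t) * \<phi> (xx - u) + t * \<phi> z" using convex_onD[OF phi_convex t, of "xx - u" z] by simp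
  hence "(1 + n) * \<phi> xx \<le> (1 + n) * ((1 - t) * \<phi> (xx - u) + t * \<phi> z)" using n by (intro mult_left_mono) auto
  also have "\<dots> = ((1 + n) * (1 - t)) * \<phi> (xx - u) + ((1 + n) * t) * \<phi> z" by (simp add: algebra_simps)
  also have "(1 + n) * (1 - t) = n" using n by (simp add: t_def field_simps)
  also have "(1 + n) * t = 1" using n by (simp add: t_def field_simps)
  finally have "n * (\<phi> xx - \<phi> (xx - u)) \<le> \<phi> z - \<phi> xx" by (simp add: algebra_simps)
  moreover have "- 2 * B * n \<le> n * (\<phi> xx - \<phi> (xx - u))"
  proof -
    have "\<bar>\<phi> (xx - u)\<bar> \<le> B" using assms(2)[OF nu] .
    hence "- 2 * B \<le> \<phi> xx - \<phi> (xx - u)" using assms(1) by (simp add: abs_le_iff)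
    hence "n * (- 2 * B) \<le> n * (\<phi> xx - \<phi> (xx - u))" using n by (intro mult_left_mono) auto
    thus ?thesis by (simp add: algebra_simps)
  qed
  ultimately show ?thesis by (simp add: n_def)
qed

lemma Fmodel_x: "Fmodel g0 \<phi> (x k) \<xi>k QQ (x k) = g0 (x k) + \<phi> (x k)"
  by (simp add: Fmodel_def)

definition "Kxi = (SOME K. 0 \<le> K \<and> (\<forall>k. norm (\<xi> k) \<le> K))"

lemma Kxi: "0 \<le> Kxi" "norm (\<xi> k) \<le> Kxi"
proof -
  have c: "compact (feasible g \<inter> cball 0 Rx)" using feas_closed by (intro closed_Int_compact) auto
  have "\<forall>q\<in>feasible g \<inter> cball 0 Rx. loc_lipschitz_at g0 q \<and> upper_C2_at g0 q" using g0_reg Gamma_sub by blast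
  from uniform_sc[OF c this] obtain K where K: "0 \<le> K" "\<forall>z\<in>feasible g \<inter> cball 0 Rx. \<forall>v\<in>limiting_subdiff g0 z. norm v \<le> K"
    by blast
  have "\<forall>k. norm (\<xi> k) \<le> K"
  proof
    fix k
    have "x k \<in> feasible g \<inter> cball 0 Rx" using feas_x Rx(2)[of k] by simp
    thus "norm (\<xi> k) \<le> K" using K xi_sub by blast
  qed
  hence "\<exists>K. 0 \<le> K \<and> (\<forall>k. norm (\<xi> k) \<le> K)" using K by blast
  from someI_ex[OF this] show "0 \<le> Kxi" "norm (\<xi> k) \<le> Kxi" unfolding Kxi_def by auto
qed

definition "Dmax = 2 * (Kxi + 2 * Bphi (Rx + 1)) / \<mu>min"

lemma displacement:
  assumes j: "j \<le> jk k" and F: "Fmodel g0 \<phi> (x k) (\<xi> k) (Q k j) z \<le> Fmodel g0 \<phi> (x k) (\<xi> k) (Q k j) (x k)"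
  shows "norm (z - x k) \<le> 2 * (Kxi + 2 * Bphi (Rx + 1)) / \<mu> k j" and "norm (z - x k) \<le> Dmax"
proof -
  define n where "n = norm (z - x k)"
  define B where "B = Bphi (Rx + 1)"
  have mu: "0 < \<mu> k j" "\<mu>min \<le> \<mu> k j" using mu_gt0[OF j] mu_ge[OF j] by auto
  have F': "\<xi> k \<bullet> (z - x k) + 1/2 * ((z - x k) \<bullet> (Q k j *v (z - x k))) + \<phi> z \<le> \<phi> (x k)"
    using F by (simp add: Fmodel_def)
  have q: "\<mu> k j * n\<^sup>2 \<le> (z - x k) \<bullet> (Q k j *v (z - x k))" using Q_bnd j by (simp add: n_def)
  have xi: "- Kxi * n \<le> \<xi> k \<bullet> (z - x k)"
  proof -
    have "- (\<xi> k \<bullet> (z - x k)) \<le> norm (\<xi> k) * n" using Cauchy_Schwarz_ineq2[of "\<xi> k" "z - x k"] by (simp add: n_def)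
    also have "\<dots> \<le> Kxi * n" using Kxi by (intro mult_right_mono) (auto simp: n_def)
    finally show ?thesis by simp
  qed
  have ph: "- 2 * B * n \<le> \<phi> z - \<phi> (x k)"
  proof -
    have "norm (x k) \<le> Rx + 1" using Rx(2)[of k] by simp
    hence "\<bar>\<phi> (x k)\<bar> \<le> B" using Bphi(2)[of "x k" "Rx + 1"] by (simp add: B_def)
    moreover have "\<bar>\<phi> (x k - u)\<bar> \<le> B" if "norm u = 1" for u
    proof -
      have "norm (x k - u) \<le> norm (x k) + norm u" by (rule norm_triangle_ineq4)
      hence "norm (x k - u) \<le> Rx + 1" using Rx(2)[of k] that by simp
      thus ?thesis using Bphi(2)[of "x k - u" "Rx + 1"] by (simp add: B_def)
    qed
    ultimately show ?thesis using three_point[of "x k" B z] by (simp add: n_def)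
  qed
  have "\<mu> k j / 2 * n\<^sup>2 \<le> (Kxi + 2 * B) * n" using F' q xi ph by (simp add: algebra_simps)
  hence b: "n \<le> 2 * (Kxi + 2 * B) / \<mu> k j"
  proof (cases "n = 0")
    case True thus ?thesis using Kxi Bphi mu by (simp add: B_def)
  next
    case False
    hence np: "n > 0" by (simp add: n_def)
    assume h: "\<mu> k j / 2 * n\<^sup>2 \<le> (Kxi + 2 * B) * n"
    hence "n * (\<mu> k j / 2 * n) \<le> n * (Kxi + 2 * B)" by (simp add: power2_eq_square algebra_simps)
    hence "\<mu> k j / 2 * n \<le> Kxi + 2 * B" using np by simp
    thus ?thesis using mu by (simp add: field_simps)
  qed
  thus "norm (z - x k) \<le> 2 * (Kxi + 2 * Bphi (Rx + 1)) / \<mu> k j" by (simp add: n_def B_def)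
  have "2 * (Kxi + 2 * B) / \<mu> k j \<le> 2 * (Kxi + 2 * B) / \<mu>min"
    using mu params Kxi Bphi by (intro divide_left_mono) (auto simp: B_def)
  thus "norm (z - x k) \<le> Dmax" using b by (simp add: Dmax_def n_def B_def)
qed


definition "R1 = Rx + Dmax"

lemma Dmax0: "0 \<le> Dmax"
  using Kxi Bphi params by (simp add: Dmax_def)

lemma x_K1: "x k \<in> cball 0 R1"
  using Rx(2)[of k] Dmax0 by (simp add: R1_def)

lemma y_K1: "j \<le> jk k \<Longrightarrow> y k j \<in> cball 0 R1"
proof -
  assume j: "j \<le> jk k"
  have "norm (y k j - x k) \<le> Dmax" using displacement(2)[OF j] inexact j by blast
  hence "norm (y k j) \<le> norm (x k) + Dmax" using norm_triangle_sub[of "y k j" "x k"] by linarith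
  thus ?thesis using Rx(2)[of k] by (simp add: R1_def)
qed

lemma G_self: "Gfun g z z VV LL = g z"
  by (simp add: Gfun_def)

lemma xbar_K1: "j \<le> jk k \<Longrightarrow> xbar k j \<in> cball 0 R1"
proof -
  assume j: "j \<le> jk k"
  have "Gfun g (x k) (x k) (V k) (L k j) \<in> nonpos_orthant" using feas_x[of k] by (simp add: G_self feasible_def)
  hence "Fmodel g0 \<phi> (x k) (\<xi> k) (Q k j) (xbar k j) \<le> Fmodel g0 \<phi> (x k) (\<xi> k) (Q k j) (x k)"
    using xbar_min j by blast
  hence "norm (xbar k j - x k) \<le> Dmax" using displacement(2)[OF j] by blast
  hence "norm (xbar k j) \<le> norm (x k) + Dmax" using norm_triangle_sub[of "xbar k j" "x k"] by linarith
  thus ?thesis using Rx(2)[of k] by (simp add: R1_def)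
qed

definition "P0 \<rho> K \<longleftrightarrow> (\<forall>z\<in>feasible g \<inter> cball 0 R1. \<forall>w\<in>limiting_subdiff g0 z. norm w \<le> K \<and>
   (\<forall>yy\<in>feasible g \<inter> cball 0 R1. g0 yy \<le> g0 z + w \<bullet> (yy - z) + \<rho> / 2 * (norm (yy - z))\<^sup>2))"

lemma P0_ex: "\<exists>\<rho> K. 0 \<le> \<rho> \<and> 0 \<le> K \<and> P0 \<rho> K"
proof -
  have c: "compact (feasible g \<inter> cball 0 R1)" using feas_closed by (intro closed_Int_compact) auto
  have "\<forall>q\<in>feasible g \<inter> cball 0 R1. loc_lipschitz_at g0 q \<and> upper_C2_at g0 q" using g0_reg Gamma_sub by blast
  from uniform_sc[OF c this] show ?thesis unfolding P0_def by blast
qed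

definition "rho0 = (SOME \<rho>. \<exists>K. 0 \<le> \<rho> \<and> 0 \<le> K \<and> P0 \<rho> K)"

lemma rho0: "0 \<le> rho0" "\<exists>K. P0 rho0 K"
  using someI_ex[OF P0_ex] unfolding rho0_def[symmetric] by auto

definition "PG \<rho> K \<longleftrightarrow> (\<forall>i. \<forall>z\<in>cball 0 R1. \<forall>w\<in>limiting_subdiff (\<lambda>w. g w $ i) z. norm w \<le> K \<and>
   (\<forall>yy\<in>cball 0 R1. g yy $ i \<le> g z $ i + w \<bullet> (yy - z) + \<rho> / 2 * (norm (yy - z))\<^sup>2))"

lemma PG_ex: "\<exists>\<rho> K. 0 \<le> \<rho> \<and> 0 \<le> K \<and> PG \<rho> K"
proof -
  have "\<forall>i. \<exists>\<rho> K. 0 \<le> \<rho> \<and> 0 \<le> K \<and> (\<forall>z\<in>cball 0 R1. \<forall>w\<in>limiting_subdiff (\<lambda>w. g w $ i) z. norm w \<le> K \<and>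
   (\<forall>yy\<in>cball 0 R1. g yy $ i \<le> g z $ i + w \<bullet> (yy - z) + \<rho> / 2 * (norm (yy - z))\<^sup>2))"
  proof
    fix i
    have "\<forall>q\<in>cball 0 R1. loc_lipschitz_at (\<lambda>w. g w $ i) q \<and> upper_C2_at (\<lambda>w. g w $ i) q" using g_reg by blast
    from uniform_sc[OF compact_cball this] show "\<exists>\<rho> K. 0 \<le> \<rho> \<and> 0 \<le> K \<and> (\<forall>z\<in>cball 0 R1. \<forall>w\<in>limiting_subdiff (\<lambda>w. g w $ i) z. norm w \<le> K \<and>
   (\<forall>yy\<in>cball 0 R1. g yy $ i \<le> g z $ i + w \<bullet> (yy - z) + \<rho> / 2 * (norm (yy - z))\<^sup>2))" by blast
  qed
  then obtain rf kf where rk: "\<forall>i. 0 \<le> rf i \<and> 0 \<le> kf i \<and> (\<forall>z\<in>cball 0 R1. \<forall>w\<in>limiting_subdiff (\<lambda>w. g w $ i) z. norm w \<le> kf i \<and>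
   (\<forall>yy\<in>cball 0 R1. g yy $ i \<le> g z $ i + w \<bullet> (yy - z) + rf i / 2 * (norm (yy - z))\<^sup>2))"
    by metis
  define \<rho> where "\<rho> = Max (range rf)"
  define K where "K = Max (range kf)"
  have rle: "rf i \<le> \<rho>" for i unfolding \<rho>_def by (rule Max_ge) auto
  have kle: "kf i \<le> K" for i unfolding K_def by (rule Max_ge) auto
  have "PG \<rho> K" unfolding PG_def
  proof (intro allI ballI conjI)
    fix i z w assume z: "z \<in> cball 0 R1" and w: "w \<in> limiting_subdiff (\<lambda>w. g w $ i) z"
    show "norm w \<le> K" using rk z w kle[of i] by force
    fix yy :: "real^'n" assume yy: "yy \<in> cball 0 R1"
    have "g yy $ i \<le> g z $ i + w \<bullet> (yy - z) + rf i / 2 * (norm (yy - z))\<^sup>2" using rk z w yy by blast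
    also have "rf i / 2 * (norm (yy - z))\<^sup>2 \<le> \<rho> / 2 * (norm (yy - z))\<^sup>2"
      using rle[of i] by (intro mult_right_mono) auto
    finally show "g yy $ i \<le> g z $ i + w \<bullet> (yy - z) + \<rho> / 2 * (norm (yy - z))\<^sup>2" by simp
  qed
  moreover have "0 \<le> \<rho>" using rle[of undefined] rk by (meson order_trans)
  moreover have "0 \<le> K" using kle[of undefined] rk by (meson order_trans)
  ultimately show ?thesis by blast
qed

definition "rhog = (SOME \<rho>. \<exists>K. 0 \<le> \<rho> \<and> 0 \<le> K \<and> PG \<rho> K)"
definition "Kg = (SOME K. 0 \<le> rhog \<and> 0 \<le> K \<and> PG rhog K)"

lemma rhog: "0 \<le> rhog" "0 \<le> Kg" "PG rhog Kg"
proof -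
  have "\<exists>K. 0 \<le> rhog \<and> 0 \<le> K \<and> PG rhog K"
    using someI_ex[of "\<lambda>\<rho>. \<exists>K. 0 \<le> \<rho> \<and> 0 \<le> K \<and> PG \<rho> K"] PG_ex unfolding rhog_def by blast
  from someI_ex[OF this] show "0 \<le> rhog" "0 \<le> Kg" "PG rhog Kg" unfolding Kg_def[symmetric] by auto
qed

lemma inexact_G:
  assumes j: "j \<le> jk k"
  shows "Gfun g (y k j) (x k) (V k) (L k j) $ i \<le> \<beta>C / 2 * (norm (y k j - x k))\<^sup>2"
    and "- (lam k j \<bullet> Gfun g (y k j) (x k) (V k) (L k j)) \<le> \<beta>C / 2 * (norm (y k j - x k))\<^sup>2"
    and "infnorm (\<chi> i. max 0 (Gfun g (y k j) (x k) (V k) (L k j) $ i)) \<le> \<beta>C / 2 * (norm (y k j - x k))\<^sup>2"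
proof -
  define G where "G = Gfun g (y k j) (x k) (V k) (L k j)"
  have I: "max 0 (- (lam k j \<bullet> G)) + infnorm (\<chi> i. max 0 (G $ i)) \<le> \<beta>C / 2 * (norm (y k j - x k))\<^sup>2"
    using inexact j by (simp add: G_def)
  have i0: "0 \<le> infnorm (\<chi> i. max 0 (G $ i))" by (rule infnorm_pos_le)
  have "G $ i \<le> \<bar>(\<chi> i. max 0 (G $ i)) $ i\<bar>" by simp
  also have "\<dots> \<le> infnorm (\<chi> i. max 0 (G $ i))" by (rule component_le_infnorm_cart)
  finally have "G $ i \<le> infnorm (\<chi> i. max 0 (G $ i))" .
  thus "G $ i \<le> \<beta>C / 2 * (norm (y k j - x k))\<^sup>2" using I by linarith
  show "- (lam k j \<bullet> G) \<le> \<beta>C / 2 * (norm (y k j - x k))\<^sup>2" using I i0 by linarith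
  show "infnorm (\<chi> i. max 0 (G $ i)) \<le> \<beta>C / 2 * (norm (y k j - x k))\<^sup>2" using I by linarith
qed


definition "Mmu = max \<mu>max (\<tau> * (rho0 + \<alpha>))"

lemma mu_small:
  assumes j: "j < jk k" and fe: "g (y k j) \<in> nonpos_orthant"
  shows "\<mu> k j < rho0 + \<alpha>"
proof (rule ccontr)
  assume "\<not> \<mu> k j < rho0 + \<alpha>"
  hence mu: "rho0 + \<alpha> \<le> \<mu> k j" by simp
  have j': "j \<le> jk k" using j by simp
  obtain K where P: "P0 rho0 K" using rho0 by blast
  define n where "n = norm (y k j - x k)"
  have xS: "x k \<in> feasible g \<inter> cball 0 R1" using feas_x x_K1 by blast
  have yS: "y k j \<in> feasible g \<inter> cball 0 R1" using fe y_K1[OF j'] by (simp add: feasible_def)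
  have sc: "g0 (y k j) \<le> g0 (x k) + \<xi> k \<bullet> (y k j - x k) + rho0 / 2 * n\<^sup>2"
    using P xS yS xi_sub unfolding P0_def n_def by blast
  have "Fmodel g0 \<phi> (x k) (\<xi> k) (Q k j) (y k j) \<le> Fmodel g0 \<phi> (x k) (\<xi> k) (Q k j) (x k)"
    using inexact j' by blast
  hence F: "\<xi> k \<bullet> (y k j - x k) + 1/2 * ((y k j - x k) \<bullet> (Q k j *v (y k j - x k))) + \<phi> (y k j) \<le> \<phi> (x k)"
    by (simp add: Fmodel_def)
  have q: "\<mu> k j * n\<^sup>2 \<le> (y k j - x k) \<bullet> (Q k j *v (y k j - x k))" using Q_bnd j' by (simp add: n_def)
  have "(rho0 + \<alpha>) * n\<^sup>2 \<le> \<mu> k j * n\<^sup>2" using mu by (intro mult_right_mono) auto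
  hence "g0 (y k j) + \<phi> (y k j) \<le> g0 (x k) + \<phi> (x k) - \<alpha> / 2 * n\<^sup>2"
    using sc F q by (simp add: algebra_simps)
  hence "Fobj g0 g \<phi> (y k j) \<le> Fobj g0 g \<phi> (x k) - ereal (\<alpha> / 2 * (norm (y k j - x k))\<^sup>2)"
    using fe feas_x[of k] by (simp add: Fobj_def feasible_def n_def)
  thus False using reject j fe by blast
qed

lemma mu_bound: "j \<le> jk k \<Longrightarrow> \<mu> k j \<le> Mmu"
proof (induction j)
  case 0 show ?case using mu0 unfolding Mmu_def by (meson max.coboundedI1)
next
  case (Suc j)
  hence j: "j < jk k" by simp
  show ?case
  proof (cases "g (y k j) \<in> nonpos_orthant")
    case True
    hence "\<mu> k (Suc j) = \<tau> * \<mu> k j" using update j by blast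
    also have "\<dots> \<le> \<tau> * (rho0 + \<alpha>)" using mu_small[OF j True] params by (intro mult_left_mono) auto
    finally show ?thesis by (simp add: Mmu_def)
  next
    case False
    hence "\<mu> k (Suc j) = \<mu> k j" using update j by blast
    thus ?thesis using Suc by simp
  qed
qed

definition "cL = max 1 (\<tau> * ((\<beta>C + rhog) / Lmin))"

lemma L_small:
  assumes j: "j < jk k" and nf: "g (y k j) \<notin> nonpos_orthant" and c: "L k j = c *\<^sub>R L k 0" and c1: "1 \<le> c"
  shows "c < (\<beta>C + rhog) / Lmin"
proof (rule ccontr)
  assume "\<not> c < (\<beta>C + rhog) / Lmin"
  hence cge: "(\<beta>C + rhog) / Lmin \<le> c" by simp
  have j': "j \<le> jk k" using j by simp
  define n where "n = norm (y k j - x k)"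
  have Li: "\<beta>C + rhog \<le> L k j $ i" for i
  proof -
    have "\<beta>C + rhog = (\<beta>C + rhog) / Lmin * Lmin" using params by simp
    also have "\<dots> \<le> c * L k 0 $ i" using cge L0 params c1 by (intro mult_mono) auto
    finally show ?thesis using c by simp
  qed
  have "g (y k j) $ i \<le> 0" for i
  proof -
    have col: "column i (V k) \<in> limiting_subdiff (\<lambda>w. g w $ i) (x k)" using V_sub by (simp add: subdiff_vec_def)
    have "g (y k j) $ i \<le> g (x k) $ i + column i (V k) \<bullet> (y k j - x k) + rhog / 2 * n\<^sup>2"
      using rhog(3) x_K1 y_K1[OF j'] col unfolding PG_def n_def by blast
    also have "\<dots> = Gfun g (y k j) (x k) (V k) (L k j) $ i + (rhog - L k j $ i) / 2 * n\<^sup>2"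
      by (simp add: Gfun_comp n_def algebra_simps diff_divide_distrib)
    also have "\<dots> \<le> \<beta>C / 2 * n\<^sup>2 + (rhog - L k j $ i) / 2 * n\<^sup>2"
      using inexact_G(1)[OF j', of i] by (simp add: n_def)
    also have "\<dots> = (\<beta>C + rhog - L k j $ i) / 2 * n\<^sup>2" by (simp add: algebra_simps diff_divide_distrib add_divide_distrib)
    also have "\<dots> \<le> 0" using Li[of i] by (intro mult_nonpos_nonneg) auto
    finally show ?thesis .
  qed
  thus False using nf by (simp add: orth_mem)
qed

lemma L_bound: "j \<le> jk k \<Longrightarrow> \<exists>c. 1 \<le> c \<and> c \<le> cL \<and> L k j = c *\<^sub>R L k 0"
proof (induction j)
  case 0 show ?case by (intro exI[of _ 1]) (simp add: cL_def)
next
  case (Suc j)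
  hence j: "j < jk k" by simp
  then obtain c where c: "1 \<le> c" "c \<le> cL" "L k j = c *\<^sub>R L k 0" using Suc by auto
  show ?case
  proof (cases "g (y k j) \<in> nonpos_orthant")
    case True
    hence "L k (Suc j) = L k j" using update j by blast
    thus ?thesis using c by auto
  next
    case False
    hence e: "L k (Suc j) = \<tau> *\<^sub>R L k j" using update j by blast
    have "c < (\<beta>C + rhog) / Lmin" by (rule L_small[OF j False c(3) c(1)])
    hence "\<tau> * c \<le> \<tau> * ((\<beta>C + rhog) / Lmin)" using params by (intro mult_left_mono) auto
    hence "\<tau> * c \<le> cL" by (simp add: cL_def)
    moreover have "1 \<le> \<tau> * c"
    proof -
      have "1 * 1 \<le> \<tau> * c" using c(1) params by (intro mult_mono) auto
      thus ?thesis by simp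
    qed
    moreover have "L k (Suc j) = (\<tau> * c) *\<^sub>R L k 0" using e c(3) by simp
    ultimately show ?thesis by blast
  qed
qed

lemma L_comp: "j \<le> jk k \<Longrightarrow> 0 \<le> L k j $ i \<and> L k j $ i \<le> cL * Lmax"
proof -
  assume j: "j \<le> jk k"
  obtain c where c: "1 \<le> c" "c \<le> cL" "L k j = c *\<^sub>R L k 0" using L_bound[OF j] by blast
  have l: "Lmin \<le> L k 0 $ i" "L k 0 $ i \<le> Lmax" using L0 by auto
  have "0 \<le> L k j $ i" using c l params by simp
  moreover have "L k j $ i \<le> cL * Lmax" using c l params by (simp add: mult_mono)
  ultimately show ?thesis by blast
qed


lemma G_comp_ineq:
  fixes VV :: "real^'m^'n" and LL :: "real^'m"
  assumes "\<forall>i. 0 \<le> LL $ i"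
  shows "Gfun g zz s VV LL $ i \<ge> Gfun g p s VV LL $ i + (VV *v axis i 1 + (LL \<bullet> axis i 1) *\<^sub>R (p - s)) \<bullet> (zz - p)"
proof -
  have "(VV *v axis i 1 + (LL \<bullet> axis i 1) *\<^sub>R (p - s)) \<bullet> (zz - p) \<le> axis i 1 \<bullet> (Gfun g zz s VV LL - Gfun g p s VV LL)"
    by (rule grad_ineq) (use assms in \<open>auto simp: axis_def\<close>)
  also have "\<dots> = Gfun g zz s VV LL $ i - Gfun g p s VV LL $ i"
  proof -
    have "axis i 1 \<bullet> w = w $ i" for w :: "real^'m" by (metis inner_commute cart_eq_inner_axis)
    thus ?thesis by simp
  qed
  finally show ?thesis by simp
qed

lemma Gset_convex:
  fixes VV :: "real^'m^'n" and LL :: "real^'m"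
  assumes L: "\<forall>i. 0 \<le> LL $ i"
  shows "convex {z. Gfun g z s VV LL \<in> nonpos_orthant}"
  unfolding convex_def
proof (intro ballI allI impI)
  fix a b :: "real^'n" and t1 t2 :: real
  assume a: "a \<in> {z. Gfun g z s VV LL \<in> nonpos_orthant}" and b: "b \<in> {z. Gfun g z s VV LL \<in> nonpos_orthant}"
    and t: "0 \<le> t1" "0 \<le> t2" "t1 + t2 = 1"
  define p where "p = t1 *\<^sub>R a + t2 *\<^sub>R b"
  have "Gfun g p s VV LL $ i \<le> 0" for i
  proof -
    define gp where "gp = VV *v axis i 1 + (LL \<bullet> axis i 1) *\<^sub>R (p - s)"
    have ia: "Gfun g a s VV LL $ i \<ge> Gfun g p s VV LL $ i + gp \<bullet> (a - p)" unfolding gp_def by (rule G_comp_ineq[OF L])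
    have ib: "Gfun g b s VV LL $ i \<ge> Gfun g p s VV LL $ i + gp \<bullet> (b - p)" unfolding gp_def by (rule G_comp_ineq[OF L])
    have z: "t1 *\<^sub>R (a - p) + t2 *\<^sub>R (b - p) = 0"
    proof -
      have "t1 *\<^sub>R (a - p) + t2 *\<^sub>R (b - p) = p - (t1 + t2) *\<^sub>R p"
        by (simp add: p_def algebra_simps)
      thus ?thesis using t by simp
    qed
    have "t1 * Gfun g a s VV LL $ i + t2 * Gfun g b s VV LL $ i \<ge>
          t1 * (Gfun g p s VV LL $ i + gp \<bullet> (a - p)) + t2 * (Gfun g p s VV LL $ i + gp \<bullet> (b - p))"
      using ia ib t by (intro add_mono mult_left_mono) auto
    also have "t1 * (Gfun g p s VV LL $ i + gp \<bullet> (a - p)) + t2 * (Gfun g p s VV LL $ i + gp \<bullet> (b - p))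
        = (t1 + t2) * Gfun g p s VV LL $ i + gp \<bullet> (t1 *\<^sub>R (a - p) + t2 *\<^sub>R (b - p))"
      by (simp add: inner_add_right algebra_simps)
    also have "\<dots> = Gfun g p s VV LL $ i" using t z by simp
    finally have "Gfun g p s VV LL $ i \<le> t1 * Gfun g a s VV LL $ i + t2 * Gfun g b s VV LL $ i" .
    also have "\<dots> \<le> 0" using a b t by (auto simp: orth_mem intro!: add_nonpos_nonpos mult_nonneg_nonpos)
    finally show ?thesis .
  qed
  thus "t1 *\<^sub>R a + t2 *\<^sub>R b \<in> {z. Gfun g z s VV LL \<in> nonpos_orthant}" by (simp add: orth_mem p_def)
qed

definition "XB k = xbar k (jk k)"
definition "YY k = y k (jk k)"
definition "QQ k = Q k (jk k)"
definition "LL k = L k (jk k)"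
definition "MU k = \<mu> k (jk k)"
definition "uu k = (x k, LL k, V k, \<xi> k, QQ k)"

lemma YY: "YY k = x (Suc k)" by (simp add: YY_def x_next)

lemma LL_nonneg: "\<forall>i. 0 \<le> LL k $ i" using L_comp[of "jk k" k] by (simp add: LL_def)

lemma Sset_uu: "Sset g (uu k) = {z. Gfun g z (x k) (V k) (LL k) \<in> nonpos_orthant}"
  by (simp add: Sset_def Hfun_def uu_def)

lemma Hfun_uu: "Hfun g (uu k) z = Gfun g z (x k) (V k) (LL k)"
  by (simp add: Hfun_def uu_def)

lemma gradH_uu: "gradH (uu k) z lb = V k *v lb + (LL k \<bullet> lb) *\<^sub>R (z - x k)"
  by (simp add: gradH_def uu_def)

lemma in_U_uu: "in_U (uu k)"
proof -
  have "transpose (QQ k) = QQ k" "\<forall>d. \<mu> k (jk k) * (norm d)\<^sup>2 \<le> d \<bullet> (QQ k *v d)"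
    using Q_bnd by (auto simp: QQ_def)
  moreover have "0 < \<mu> k (jk k)" using mu_gt0 by simp
  ultimately have "\<forall>d. 0 \<le> d \<bullet> (QQ k *v d)" by (metis mult_nonneg_nonneg less_imp_le zero_le_power2 order_trans)
  thus ?thesis using LL_nonneg \<open>transpose (QQ k) = QQ k\<close> by (simp add: in_U_def uu_def)
qed

lemma XB_in: "XB k \<in> Sset g (uu k)"
  using xbar_min by (simp add: Sset_uu XB_def LL_def)

lemma kkt_k: "\<exists>a. (\<forall>yy. \<phi> (XB k) + a \<bullet> (yy - XB k) \<le> \<phi> yy) \<and>
   - (a + (\<xi> k + QQ k *v (XB k - x k))) \<in> normal_cone (Sset g (uu k)) (XB k)"
proof -
  define C where "C = Sset g (uu k)"
  have cC: "convex C" unfolding C_def Sset_uu by (rule Gset_convex[OF LL_nonneg])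
  have xb: "XB k \<in> C" using XB_in by (simp add: C_def)
  have sym: "transpose (QQ k) = QQ k" using Q_bnd by (simp add: QQ_def)
  have opt: "\<forall>z\<in>C. \<xi> k \<bullet> (XB k - x k) + 1/2 * ((XB k - x k) \<bullet> (QQ k *v (XB k - x k))) + \<phi> (XB k)
                    \<le> \<xi> k \<bullet> (z - x k) + 1/2 * ((z - x k) \<bullet> (QQ k *v (z - x k))) + \<phi> z"
  proof
    fix z assume "z \<in> C"
    hence "Gfun g z (x k) (V k) (L k (jk k)) \<in> nonpos_orthant" by (simp add: C_def Sset_uu LL_def)
    hence "Fmodel g0 \<phi> (x k) (\<xi> k) (QQ k) (XB k) \<le> Fmodel g0 \<phi> (x k) (\<xi> k) (QQ k) z"
      using xbar_min by (simp add: XB_def QQ_def)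
    thus "\<xi> k \<bullet> (XB k - x k) + 1/2 * ((XB k - x k) \<bullet> (QQ k *v (XB k - x k))) + \<phi> (XB k)
                    \<le> \<xi> k \<bullet> (z - x k) + 1/2 * ((z - x k) \<bullet> (QQ k *v (z - x k))) + \<phi> z"
      by (simp add: Fmodel_def)
  qed
  have fo: "\<forall>z\<in>C. \<phi> (XB k) \<le> (\<xi> k + QQ k *v (XB k - x k)) \<bullet> (z - XB k) + \<phi> z"
    by (rule first_order[OF cC xb phi_convex sym opt])
  obtain a where a: "\<forall>yy. \<phi> (XB k) + a \<bullet> (yy - XB k) \<le> \<phi> yy"
    and n: "\<forall>z\<in>C. 0 \<le> (a + (\<xi> k + QQ k *v (XB k - x k))) \<bullet> (z - XB k)"
    using kkt_sep[OF cC xb phi_convex fo] by blast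
  have "- (a + (\<xi> k + QQ k *v (XB k - x k))) \<in> normal_cone C (XB k)"
  proof (rule convex_normal[OF xb], intro ballI)
    fix z assume z: "z \<in> C"
    have "0 \<le> (a + (\<xi> k + QQ k *v (XB k - x k))) \<bullet> (z - XB k)" using n z by blast
    thus "- (a + (\<xi> k + QQ k *v (XB k - x k))) \<bullet> (z - XB k) \<le> 0" by (simp only: inner_minus_left neg_le_0_iff_le)
  qed
  thus ?thesis using a by (auto simp: C_def)
qed

definition "VB k = (SOME a. (\<forall>yy. \<phi> (XB k) + a \<bullet> (yy - XB k) \<le> \<phi> yy) \<and>
   - (a + (\<xi> k + QQ k *v (XB k - x k))) \<in> normal_cone (Sset g (uu k)) (XB k))"
definition "NV k = - (VB k + (\<xi> k + QQ k *v (XB k - x k)))"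

lemma VB: "\<phi> (XB k) + VB k \<bullet> (yy - XB k) \<le> \<phi> yy" "NV k \<in> normal_cone (Sset g (uu k)) (XB k)"
  using someI_ex[OF kkt_k[of k]] unfolding VB_def[symmetric] NV_def by auto

lemma XB_K1: "XB k \<in> cball 0 R1" using xbar_K1 by (simp add: XB_def)
lemma YY_K1: "YY k \<in> cball 0 R1" using y_K1 by (simp add: YY_def)

lemma VB_bound: "norm (VB k) \<le> 2 * Bphi (R1 + 1)"
proof (cases "VB k = 0")
  case True thus ?thesis using Bphi(1) by simp
next
  case False
  define u where "u = (1 / norm (VB k)) *\<^sub>R VB k"
  have "VB k \<bullet> u = norm (VB k)" using False by (simp add: u_def power2_norm_eq_inner[symmetric] power2_eq_square)
  hence s: "\<phi> (XB k) + norm (VB k) \<le> \<phi> (XB k + u)" using VB(1)[of k "XB k + u"] by simp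
  have nu: "norm u = 1" using False by (simp add: u_def)
  have "norm (XB k + u) \<le> R1 + 1" using XB_K1[of k] nu norm_triangle_ineq[of "XB k" u] by simp
  hence b1: "\<bar>\<phi> (XB k + u)\<bar> \<le> Bphi (R1 + 1)" by (rule Bphi(2))
  have "norm (XB k) \<le> R1 + 1" using XB_K1[of k] by simp
  hence b2: "\<bar>\<phi> (XB k)\<bar> \<le> Bphi (R1 + 1)" by (rule Bphi(2))
  show ?thesis using s b1 b2 by (simp add: abs_le_iff)
qed

lemma QQ_op: "norm (QQ k *v d) \<le> (Mmu + M) * norm d"
proof -
  have j: "jk k \<le> jk k" by simp
  have sym: "transpose (QQ k) = QQ k" and up0: "\<forall>d. d \<bullet> (QQ k *v d) \<le> (MU k + M) * (norm d)\<^sup>2"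
    and lo: "\<forall>d. MU k * (norm d)\<^sup>2 \<le> d \<bullet> (QQ k *v d)"
    using Q_bnd by (auto simp: QQ_def MU_def)
  have mu: "0 < MU k" "MU k \<le> Mmu" using mu_gt0[OF j] mu_bound[OF j] by (auto simp: MU_def)
  have psd: "\<forall>d. 0 \<le> d \<bullet> (QQ k *v d)" using lo mu by (metis mult_nonneg_nonneg less_imp_le zero_le_power2 order_trans)
  have "norm (QQ k *v d) \<le> (MU k + M) * norm d" by (rule psd_bound[OF sym psd up0]) (use mu params in auto)
  also have "\<dots> \<le> (Mmu + M) * norm d" using mu by (intro mult_right_mono) auto
  finally show ?thesis .
qed

lemma XB_near: "norm (XB k - x k) \<le> Dmax"
proof -
  have j: "jk k \<le> jk k" by simp
  have "Gfun g (x k) (x k) (V k) (L k (jk k)) \<in> nonpos_orthant" using feas_x[of k] by (simp add: G_self feasible_def)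
  hence "Fmodel g0 \<phi> (x k) (\<xi> k) (Q k (jk k)) (xbar k (jk k)) \<le> Fmodel g0 \<phi> (x k) (\<xi> k) (Q k (jk k)) (x k)"
    using xbar_min by blast
  thus ?thesis using displacement(2)[OF j] by (simp add: XB_def)
qed

definition "Abnd = 2 * Bphi (R1 + 1) + Kxi + (Mmu + M) * Dmax"

lemma NV_bound: "norm (NV k) \<le> Abnd"
proof -
  have "norm (NV k) \<le> norm (VB k) + (norm (\<xi> k) + norm (QQ k *v (XB k - x k)))"
    unfolding NV_def norm_minus_cancel by (meson norm_triangle_ineq order_trans add_left_mono)
  also have "\<dots> \<le> 2 * Bphi (R1 + 1) + (Kxi + (Mmu + M) * Dmax)"
  proof -
    have "norm (QQ k *v (XB k - x k)) \<le> (Mmu + M) * Dmax"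
    proof -
      have "0 \<le> Mmu + M" using params mu_bound[of "jk k" k] mu_gt0[of "jk k" k] by simp
      thus ?thesis using QQ_op[of k "XB k - x k"] XB_near[of k] by (meson mult_left_mono order_trans)
    qed
    thus ?thesis using VB_bound[of k] Kxi(2)[of k] by linarith
  qed
  finally show ?thesis by (simp add: Abnd_def)
qed


lemma inner_orth_nonpos:
  fixes lb G :: "real^'m"
  assumes "\<forall>i. 0 \<le> lb $ i" "G \<in> nonpos_orthant"
  shows "lb \<bullet> G \<le> 0"
  using assms unfolding inner_vec_def orth_mem by (intro sum_nonpos) (auto intro: mult_nonneg_nonpos)

lemma e_bound:
  assumes lb: "lb \<in> Lambda_set g (uu k) (XB k) (NV k)"
  shows "\<mu>min * (norm (XB k - YY k))\<^sup>2 \<le> \<beta>S * norm (YY k - x k) * norm (XB k - YY k)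
          + \<beta>C / 2 * (1 + (\<Sum>i\<in>UNIV. lb $ i)) * (norm (YY k - x k))\<^sup>2"
proof -
  define j where "j = jk k"
  have j: "j \<le> jk k" by (simp add: j_def)
  define Y where "Y = YY k"
  define X where "X = x k"
  define Z where "Z = XB k"
  define Qk where "Qk = QQ k"
  define Lk where "Lk = LL k"
  define lm where "lm = lam k j"
  define d where "d = norm (Y - X)"
  define e where "e = norm (Z - Y)"
  define Fm where "Fm = (\<lambda>z. \<xi> k \<bullet> (z - X) + 1/2 * ((z - X) \<bullet> (Qk *v (z - X))) + \<phi> z)"
  define G where "G = (\<lambda>z. Gfun g z X (V k) Lk)"
  have sym: "transpose Qk = Qk" using Q_bnd by (simp add: Qk_def QQ_def)
  have Qlo: "\<mu> k j * (norm h)\<^sup>2 \<le> h \<bullet> (Qk *v h)" for h using Q_bnd by (simp add: Qk_def QQ_def j_def)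
  have mu: "\<mu>min \<le> \<mu> k j" using mu_ge[OF j] .
  have Lnn: "\<forall>i. 0 \<le> Lk $ i" using LL_nonneg by (simp add: Lk_def)
  have lmnn: "\<forall>i. 0 \<le> lm $ i" using inexact j by (simp add: lm_def)
  have expand: "Fm z - Fm w = (\<xi> k + Qk *v (w - X)) \<bullet> (z - w) + 1/2 * ((z - w) \<bullet> (Qk *v (z - w))) + (\<phi> z - \<phi> w)" for z w
  proof -
    have "(z - X) \<bullet> (Qk *v (z - X)) = (w - X) \<bullet> (Qk *v (w - X)) + 2 * 1 * ((Qk *v (w - X)) \<bullet> (z - w)) + 1\<^sup>2 * ((z - w) \<bullet> (Qk *v (z - w)))"
      using quad_expand[OF sym, of "w - X" 1 "z - w"] by simp
    thus ?thesis by (simp add: Fm_def inner_add_left inner_diff_right algebra_simps)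
  qed
  have I: "Fm Z - Fm Y \<ge> - \<beta>S * d * e - \<beta>C / 2 * d\<^sup>2 + \<mu> k j / 2 * e\<^sup>2"
  proof -
    have vY: "v k j \<in> limiting_subdiff \<phi> Y" using inexact j by (simp add: Y_def YY_def j_def)
    have ph: "\<phi> Y + v k j \<bullet> (Z - Y) \<le> \<phi> Z" by (rule convex_limiting_sub[OF phi_convex vY])
    define r where "r = \<xi> k + Qk *v (Y - X) + v k j + V k *v lm + (Lk \<bullet> lm) *\<^sub>R (Y - X)"
    have rb: "norm r \<le> \<beta>S * d" using inexact j by (simp add: r_def d_def Y_def YY_def X_def Qk_def QQ_def Lk_def LL_def lm_def j_def)
    have r1: "- (\<beta>S * d * e) \<le> r \<bullet> (Z - Y)"
    proof -
      have "- (r \<bullet> (Z - Y)) \<le> norm r * e" using Cauchy_Schwarz_ineq2[of r "Z - Y"] by (simp add: e_def)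
      also have "\<dots> \<le> \<beta>S * d * e" using rb by (intro mult_right_mono) (auto simp: e_def)
      finally show ?thesis by simp
    qed
    have gi: "(V k *v lm + (Lk \<bullet> lm) *\<^sub>R (Y - X)) \<bullet> (Z - Y) \<le> lm \<bullet> (G Z - G Y)"
      unfolding G_def by (rule grad_ineq[OF lmnn Lnn])
    have GZ: "lm \<bullet> G Z \<le> 0"
      using inner_orth_nonpos[OF lmnn] XB_in[of k] by (simp add: G_def Sset_uu Z_def X_def Lk_def)
    have GY: "- (lm \<bullet> G Y) \<le> \<beta>C / 2 * d\<^sup>2"
      using inexact_G(2)[OF j] by (simp add: G_def lm_def d_def Y_def YY_def X_def Lk_def LL_def j_def)
    have qq: "\<mu> k j * e\<^sup>2 \<le> (Z - Y) \<bullet> (Qk *v (Z - Y))" using Qlo by (simp add: e_def)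
    have "Fm Z - Fm Y = (\<xi> k + Qk *v (Y - X)) \<bullet> (Z - Y) + 1/2 * ((Z - Y) \<bullet> (Qk *v (Z - Y))) + (\<phi> Z - \<phi> Y)"
      by (rule expand)
    moreover have "(\<xi> k + Qk *v (Y - X)) \<bullet> (Z - Y) = r \<bullet> (Z - Y) - v k j \<bullet> (Z - Y) - (V k *v lm + (Lk \<bullet> lm) *\<^sub>R (Y - X)) \<bullet> (Z - Y)"
      by (simp add: r_def inner_add_left inner_diff_left)
    ultimately show ?thesis using r1 gi GZ GY qq ph by (simp add: inner_diff_right algebra_simps)
  qed
  have lbN: "lb \<in> normal_cone nonpos_orthant (G Z)" and lbg: "V k *v lb + (Lk \<bullet> lb) *\<^sub>R (Z - X) = NV k"
    using lb by (simp_all add: Lambda_set_def Hfun_uu gradH_uu G_def Z_def X_def Lk_def)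
  have lbD: "\<forall>i. 0 \<le> lb $ i \<and> lb $ i * G Z $ i = 0" using normal_orth_D[OF lbN] by blast
  have lbnn: "\<forall>i. 0 \<le> lb $ i" using lbD by blast
  have II: "Fm Y - Fm Z \<ge> - (\<Sum>i\<in>UNIV. lb $ i) * (\<beta>C / 2 * d\<^sup>2) + \<mu> k j / 2 * e\<^sup>2"
  proof -
    have ph: "\<phi> Z + VB k \<bullet> (Y - Z) \<le> \<phi> Y" using VB(1) by (simp add: Z_def)
    have eqn: "\<xi> k + Qk *v (Z - X) + VB k = - (V k *v lb + (Lk \<bullet> lb) *\<^sub>R (Z - X))"
      using lbg by (simp add: NV_def Qk_def Z_def X_def algebra_simps)
    have gi: "(V k *v lb + (Lk \<bullet> lb) *\<^sub>R (Z - X)) \<bullet> (Y - Z) \<le> lb \<bullet> (G Y - G Z)"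
      unfolding G_def by (rule grad_ineq[OF lbnn Lnn])
    have h0: "\<And>i. lb $ i * G Z $ i = 0" using lbD by blast
    have cs: "lb \<bullet> G Z = 0" by (simp add: inner_vec_def h0)
    have GY: "lb \<bullet> G Y \<le> (\<Sum>i\<in>UNIV. lb $ i) * (\<beta>C / 2 * d\<^sup>2)"
    proof -
      have "lb \<bullet> G Y = (\<Sum>i\<in>UNIV. lb $ i * G Y $ i)" by (simp add: inner_vec_def)
      also have "\<dots> \<le> (\<Sum>i\<in>UNIV. lb $ i * (\<beta>C / 2 * d\<^sup>2))"
      proof (rule sum_mono)
        fix i
        have "G Y $ i \<le> \<beta>C / 2 * d\<^sup>2"
          using inexact_G(1)[OF j, of i] by (simp add: G_def d_def Y_def YY_def X_def Lk_def LL_def j_def)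
        thus "lb $ i * G Y $ i \<le> lb $ i * (\<beta>C / 2 * d\<^sup>2)" using lbnn by (intro mult_left_mono) auto
      qed
      also have "\<dots> = (\<Sum>i\<in>UNIV. lb $ i) * (\<beta>C / 2 * d\<^sup>2)" by (simp add: sum_distrib_right)
      finally show ?thesis .
    qed
    have qq: "\<mu> k j * e\<^sup>2 \<le> (Y - Z) \<bullet> (Qk *v (Y - Z))" using Qlo[of "Y - Z"] by (simp add: e_def norm_minus_commute)
    have "Fm Y - Fm Z = (\<xi> k + Qk *v (Z - X)) \<bullet> (Y - Z) + 1/2 * ((Y - Z) \<bullet> (Qk *v (Y - Z))) + (\<phi> Y - \<phi> Z)"
      by (rule expand)
    moreover have "(\<xi> k + Qk *v (Z - X)) \<bullet> (Y - Z) = - (V k *v lb + (Lk \<bullet> lb) *\<^sub>R (Z - X)) \<bullet> (Y - Z) - VB k \<bullet> (Y - Z)"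
      using eqn by (metis add_diff_cancel_right' inner_diff_left)
    ultimately show ?thesis using gi cs GY qq ph by (simp add: inner_diff_right algebra_simps)
  qed
  have "\<mu> k j * e\<^sup>2 \<le> \<beta>S * d * e + \<beta>C / 2 * (1 + (\<Sum>i\<in>UNIV. lb $ i)) * d\<^sup>2"
    using I II by (simp add: algebra_simps)
  moreover have "\<mu>min * e\<^sup>2 \<le> \<mu> k j * e\<^sup>2" using mu by (intro mult_right_mono) auto
  ultimately show ?thesis by (simp add: e_def d_def Z_def Y_def X_def)
qed


lemma quad_le:
  fixes m b C d e :: real
  assumes m: "0 < m" and b: "0 \<le> b" and C: "0 \<le> C" and d: "0 \<le> d" and e: "0 \<le> e"
    and h: "m * e\<^sup>2 \<le> b * d * e + C * d\<^sup>2"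
  shows "e\<^sup>2 \<le> max ((2 * b / m)\<^sup>2) (2 * C / m) * d\<^sup>2"
proof (cases "e \<le> 2 * b * d / m")
  case True
  hence "e\<^sup>2 \<le> (2 * b * d / m)\<^sup>2" using e by (intro power_mono) auto
  also have "\<dots> = (2 * b / m)\<^sup>2 * d\<^sup>2" by (simp add: power_mult_distrib power_divide)
  also have "\<dots> \<le> max ((2 * b / m)\<^sup>2) (2 * C / m) * d\<^sup>2" by (intro mult_right_mono) auto
  finally show ?thesis .
next
  case False
  hence "2 * b * d / m < e" by simp
  hence "2 * b * d < m * e" using m by (simp add: field_simps)
  hence "2 * b * d * e \<le> m * e * e" using e by (intro mult_right_mono) auto
  hence "b * d * e \<le> m * e\<^sup>2 / 2" by (simp add: power2_eq_square algebra_simps)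
  hence "m * e\<^sup>2 / 2 \<le> C * d\<^sup>2" using h by linarith
  hence "e\<^sup>2 \<le> 2 * C / m * d\<^sup>2" using m by (simp add: field_simps)
  also have "\<dots> \<le> max ((2 * b / m)\<^sup>2) (2 * C / m) * d\<^sup>2" by (intro mult_right_mono) auto
  finally show ?thesis .
qed

lemma transpose_tendsto:
  fixes A :: "nat \<Rightarrow> real^'b::finite^'a::finite"
  assumes "A \<longlonglongrightarrow> A0"
  shows "(\<lambda>k. transpose (A k)) \<longlonglongrightarrow> transpose A0"
  unfolding transpose_def
  by (intro tendsto_vec_lambda tendsto_vec_nth assms)

definition "ZZ k = (uu k, XB k)"

lemma ZZ_eq: "(\<lambda>k. ((x k, L k (jk k), V k, \<xi> k, Q k (jk k)), xbar k (jk k))) = ZZ"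
  by (simp add: ZZ_def uu_def LL_def QQ_def XB_def fun_eq_iff)

lemma V_entry: "\<bar>V k $ a $ b\<bar> \<le> Kg"
proof -
  have col: "column b (V k) \<in> limiting_subdiff (\<lambda>w. g w $ b) (x k)" using V_sub by (simp add: subdiff_vec_def)
  have "norm (column b (V k)) \<le> Kg" using rhog(3) x_K1 col unfolding PG_def by blast
  moreover have "\<bar>V k $ a $ b\<bar> \<le> norm (column b (V k))"
    using component_le_norm_cart[of "column b (V k)" a] by (simp add: column_def)
  ultimately show ?thesis by simp
qed

lemma QQ_entry: "\<bar>QQ k $ a $ b\<bar> \<le> Mmu + M"
proof -
  have "\<bar>QQ k $ a $ b\<bar> = \<bar>(QQ k *v axis b 1) $ a\<bar>" by (simp add: matrix_vector_mult_basis column_def)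
  also have "\<dots> \<le> norm (QQ k *v axis b 1)" by (rule component_le_norm_cart)
  also have "\<dots> \<le> (Mmu + M) * norm (axis b (1::real))" by (rule QQ_op)
  finally show ?thesis by (simp add: norm_axis_1)
qed

lemma ZZ_bounded: "bounded (range ZZ)"
proof -
  define B where "B = Rx + real CARD('m) * (cL * Lmax) + real CARD('n) * (real CARD('m) * Kg) + Kxi
                    + real CARD('n) * (real CARD('n) * (Mmu + M)) + R1"
  have "norm (ZZ k) \<le> B" for k
  proof -
    have nL: "norm (LL k) \<le> real CARD('m) * (cL * Lmax)"
    proof -
      have "norm (LL k) \<le> (\<Sum>i\<in>UNIV. \<bar>LL k $ i\<bar>)" by (rule norm_le_l1_cart)
      also have "\<dots> \<le> (\<Sum>i\<in>(UNIV::'m set). cL * Lmax)"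
        using L_comp[of "jk k" k] by (intro sum_mono) (auto simp: LL_def)
      finally show ?thesis by simp
    qed
    have nV: "norm (V k) \<le> real CARD('n) * (real CARD('m) * Kg)" by (rule matrix_norm_entries) (use V_entry in auto)
    have nQ: "norm (QQ k) \<le> real CARD('n) * (real CARD('n) * (Mmu + M))" by (rule matrix_norm_entries) (use QQ_entry in auto)
    have nX: "norm (XB k) \<le> R1" using XB_K1[of k] by simp
    have "norm (ZZ k) \<le> norm (x k) + (norm (LL k) + (norm (V k) + (norm (\<xi> k) + norm (QQ k)))) + norm (XB k)"
      unfolding ZZ_def uu_def
      by (meson add_mono norm_Pair_le order_trans order_refl)
    thus ?thesis using Rx(2)[of k] nL nV Kxi(2)[of k] nQ nX by (simp add: B_def)
  qed
  thus ?thesis unfolding bounded_iff by blast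
qed


lemma stat:
  assumes r: "strict_mono r" and xr: "(x \<circ> r) \<longlonglongrightarrow> p"
  shows "stationary g0 g \<phi> p"
proof -
  have pF: "p \<in> feasible g" using closed_sequentially[OF feas_closed _ xr] feas_x by simp
  have pO: "p \<in> Oset" using pF Gamma_sub by blast
  have g0c: "isCont g0 p" using g0_reg pO loclip_isCont by blast
  have gic: "isCont (\<lambda>w. g w $ i) p" for i using g_reg loclip_isCont by blast
  have phic: "isCont \<phi> p" using phi_cont continuous_on_eq_continuous_at[OF open_UNIV] by blast
  have "bounded (range (ZZ \<circ> r))" using ZZ_bounded by (rule bounded_subset) auto
  then obtain l r2 where r2: "strict_mono r2" and Zl: "(ZZ \<circ> r \<circ> r2) \<longlonglongrightarrow> l"
    using bounded_imp_convergent_subsequence by blast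
  define s1 where "s1 = r \<circ> r2"
  have s1: "strict_mono s1" using r r2 by (simp add: s1_def strict_mono_o)
  have Zs1: "(\<lambda>k. ZZ (s1 k)) \<longlonglongrightarrow> l" using Zl by (simp add: s1_def comp_def)
  have "cluster_point ZZ l" unfolding cluster_point_def using s1 Zs1 by (auto simp: comp_def)
  hence bmp: "partial_BMP g (fst l) (snd l)" using A4 ZZ_eq by metis
  then obtain \<kappa> UU VV where ka: "\<kappa> > 0" and UU: "open UU" "fst l \<in> UU" and VV: "open VV" "snd l \<in> VV"
    and bmpP: "\<forall>u\<in>UU. in_U u \<longrightarrow> (\<forall>xx\<in>VV \<inter> Sset g u. \<forall>yy\<in>normal_cone (Sset g u) xx.
             \<exists>lb\<in>Lambda_set g u xx yy. norm lb \<le> \<kappa> * norm yy)"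
    unfolding partial_BMP_def by blast
  have ev1: "eventually (\<lambda>k. uu (s1 k) \<in> UU) sequentially"
  proof -
    have "(\<lambda>k. fst (ZZ (s1 k))) \<longlonglongrightarrow> fst l" by (intro tendsto_fst Zs1)
    thus ?thesis using UU unfolding tendsto_def by (simp add: ZZ_def)
  qed
  have ev2: "eventually (\<lambda>k. XB (s1 k) \<in> VV) sequentially"
  proof -
    have "(\<lambda>k. snd (ZZ (s1 k))) \<longlonglongrightarrow> snd l" by (intro tendsto_snd Zs1)
    thus ?thesis using VV unfolding tendsto_def by (simp add: ZZ_def)
  qed
  obtain N where N: "\<And>k. k \<ge> N \<Longrightarrow> uu (s1 k) \<in> UU \<and> XB (s1 k) \<in> VV"
    using eventually_conj[OF ev1 ev2] unfolding eventually_sequentially by blast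
  have exlb: "\<exists>lb. lb \<in> Lambda_set g (uu (s1 k)) (XB (s1 k)) (NV (s1 k)) \<and> norm lb \<le> \<kappa> * norm (NV (s1 k))"
    if k: "k \<ge> N" for k
  proof -
    have "XB (s1 k) \<in> VV \<inter> Sset g (uu (s1 k))" using N[OF k] XB_in by blast
    moreover have "NV (s1 k) \<in> normal_cone (Sset g (uu (s1 k))) (XB (s1 k))" by (rule VB(2))
    ultimately show ?thesis using bmpP N[OF k] in_U_uu by blast
  qed
  define LB where "LB k = (if k \<ge> N then (SOME lb. lb \<in> Lambda_set g (uu (s1 k)) (XB (s1 k)) (NV (s1 k)) \<and> norm lb \<le> \<kappa> * norm (NV (s1 k))) else 0)" for k
  have LB: "LB k \<in> Lambda_set g (uu (s1 k)) (XB (s1 k)) (NV (s1 k)) \<and> norm (LB k) \<le> \<kappa> * norm (NV (s1 k))"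
    if k: "k \<ge> N" for k
    using someI_ex[OF exlb[OF k]] k by (simp add: LB_def)
  have LBb: "norm (LB k) \<le> \<kappa> * Abnd" for k
  proof (cases "k \<ge> N")
    case True
    thus ?thesis using LB[OF True] NV_bound[of "s1 k"] ka by (meson mult_left_mono less_imp_le order_trans)
  next
    case False
    have "0 \<le> Abnd" using NV_bound[of 0] norm_ge_zero order_trans by blast
    thus ?thesis using False ka by (simp add: LB_def)
  qed
  define C2 where "C2 = \<beta>C / 2 * (1 + real CARD('m) * (\<kappa> * Abnd))"
  define E2 where "E2 = max ((2 * \<beta>S / \<mu>min)\<^sup>2) (2 * C2 / \<mu>min)"
  have Abnd0: "0 \<le> Abnd" using NV_bound[of 0] norm_ge_zero order_trans by blast
  have C20: "0 \<le> C2" using params ka Abnd0 by (simp add: C2_def)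
  have ebd: "(norm (XB (s1 k) - YY (s1 k)))\<^sup>2 \<le> E2 * (dd (s1 k))\<^sup>2" if k: "k \<ge> N" for k
  proof -
    have lbL: "LB k \<in> Lambda_set g (uu (s1 k)) (XB (s1 k)) (NV (s1 k))" using LB[OF k] by blast
    have sumb: "(\<Sum>i\<in>UNIV. LB k $ i) \<le> real CARD('m) * (\<kappa> * Abnd)"
    proof -
      have "(\<Sum>i\<in>UNIV. LB k $ i) \<le> (\<Sum>i\<in>(UNIV::'m set). \<kappa> * Abnd)"
      proof (rule sum_mono)
        fix i
        have "LB k $ i \<le> norm (LB k)" using component_le_norm_cart[of "LB k" i] by simp
        thus "LB k $ i \<le> \<kappa> * Abnd" using LBb[of k] by simp
      qed
      thus ?thesis by simp
    qed
    have h: "\<mu>min * (norm (XB (s1 k) - YY (s1 k)))\<^sup>2 \<le> \<beta>S * dd (s1 k) * norm (XB (s1 k) - YY (s1 k))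
          + \<beta>C / 2 * (1 + (\<Sum>i\<in>UNIV. LB k $ i)) * (dd (s1 k))\<^sup>2"
      using e_bound[OF lbL] by (simp add: YY dd_def)
    have "\<beta>C / 2 * (1 + (\<Sum>i\<in>UNIV. LB k $ i)) * (dd (s1 k))\<^sup>2 \<le> C2 * (dd (s1 k))\<^sup>2"
      using sumb params by (intro mult_right_mono) (auto simp: C2_def)
    hence h2: "\<mu>min * (norm (XB (s1 k) - YY (s1 k)))\<^sup>2 \<le> \<beta>S * dd (s1 k) * norm (XB (s1 k) - YY (s1 k)) + C2 * (dd (s1 k))\<^sup>2"
      using h by linarith
    show ?thesis unfolding E2_def
      by (rule quad_le[OF _ _ C20 _ _ h2]) (use params in \<open>auto simp: dd_def\<close>)
  qed
  have dds1: "(\<lambda>k. dd (s1 k)) \<longlonglongrightarrow> 0" using LIMSEQ_subseq_LIMSEQ[OF dd_zero s1] by (simp add: comp_def)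
  have e0: "(\<lambda>k. norm (XB (s1 k) - YY (s1 k))) \<longlonglongrightarrow> 0"
  proof -
    have "(\<lambda>k. E2 * (dd (s1 k))\<^sup>2) \<longlonglongrightarrow> E2 * 0\<^sup>2" by (intro tendsto_intros dds1)
    hence l: "(\<lambda>k. E2 * (dd (s1 k))\<^sup>2) \<longlonglongrightarrow> 0" by simp
    have "eventually (\<lambda>k. norm ((norm (XB (s1 k) - YY (s1 k)))\<^sup>2) \<le> E2 * (dd (s1 k))\<^sup>2) sequentially"
      using ebd unfolding eventually_sequentially by auto
    hence "(\<lambda>k. (norm (XB (s1 k) - YY (s1 k)))\<^sup>2) \<longlonglongrightarrow> 0" by (rule Lim_null_comparison[OF _ l])
    hence "(\<lambda>k. sqrt ((norm (XB (s1 k) - YY (s1 k)))\<^sup>2)) \<longlonglongrightarrow> sqrt 0" by (rule tendsto_real_sqrt)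
    thus ?thesis by simp
  qed
  have xbx: "(\<lambda>k. XB (s1 k) - x (s1 k)) \<longlonglongrightarrow> 0"
  proof -
    have a: "(\<lambda>k. XB (s1 k) - YY (s1 k)) \<longlonglongrightarrow> 0" using e0 tendsto_norm_zero_iff by blast
    have "(\<lambda>k. norm (YY (s1 k) - x (s1 k))) \<longlonglongrightarrow> 0" using dds1 by (simp add: YY dd_def)
    hence b: "(\<lambda>k. YY (s1 k) - x (s1 k)) \<longlonglongrightarrow> 0" by (simp only: tendsto_norm_zero_iff)
    have "(\<lambda>k. (XB (s1 k) - YY (s1 k)) + (YY (s1 k) - x (s1 k))) \<longlonglongrightarrow> 0 + 0" by (intro tendsto_add a b)
    thus ?thesis by simp
  qed
  have "bounded (range (\<lambda>k. (LB k, VB (s1 k))))"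
  proof -
    have "norm (LB k, VB (s1 k)) \<le> \<kappa> * Abnd + 2 * Bphi (R1 + 1)" for k
      using norm_Pair_le[of "LB k" "VB (s1 k)"] LBb[of k] VB_bound[of "s1 k"] by linarith
    thus ?thesis unfolding bounded_iff by blast
  qed
  then obtain lv r3 where r3: "strict_mono r3" and Wl: "((\<lambda>k. (LB k, VB (s1 k))) \<circ> r3) \<longlonglongrightarrow> lv"
    using bounded_imp_convergent_subsequence by blast
  obtain ls vs where lv: "lv = (ls, vs)" by (cases lv)
  define t where "t = s1 \<circ> r3"
  have LBl: "(\<lambda>k. LB (r3 k)) \<longlonglongrightarrow> ls"
    using tendsto_fst[OF Wl] by (simp add: lv comp_def)
  have VBl: "(\<lambda>k. VB (t k)) \<longlonglongrightarrow> vs"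
    using tendsto_snd[OF Wl] by (simp add: lv comp_def t_def)
  obtain p0 Ls Vs \<xi>s Qs xbs where l: "l = ((p0, Ls, Vs, \<xi>s, Qs), xbs)" by (metis prod.exhaust)
  have Zt: "(\<lambda>k. ZZ (t k)) \<longlonglongrightarrow> l" using LIMSEQ_subseq_LIMSEQ[OF Zs1 r3] by (simp add: t_def comp_def)
  have xt: "(\<lambda>k. x (t k)) \<longlonglongrightarrow> p"
    using LIMSEQ_subseq_LIMSEQ[OF xr strict_mono_o[OF r2 r3]] by (simp add: t_def s1_def comp_def)
  have Lt: "(\<lambda>k. LL (t k)) \<longlonglongrightarrow> Ls" using tendsto_fst[OF tendsto_snd[OF tendsto_fst[OF Zt]]] by (simp add: l ZZ_def uu_def)
  have Vt: "(\<lambda>k. V (t k)) \<longlonglongrightarrow> Vs" using tendsto_fst[OF tendsto_snd[OF tendsto_snd[OF tendsto_fst[OF Zt]]]] by (simp add: l ZZ_def uu_def)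
  have \<xi>t: "(\<lambda>k. \<xi> (t k)) \<longlonglongrightarrow> \<xi>s" using tendsto_fst[OF tendsto_snd[OF tendsto_snd[OF tendsto_snd[OF tendsto_fst[OF Zt]]]]] by (simp add: l ZZ_def uu_def)
  have Qt: "(\<lambda>k. QQ (t k)) \<longlonglongrightarrow> Qs" using tendsto_snd[OF tendsto_snd[OF tendsto_snd[OF tendsto_snd[OF tendsto_fst[OF Zt]]]]] by (simp add: l ZZ_def uu_def)
  have dt: "(\<lambda>k. XB (t k) - x (t k)) \<longlonglongrightarrow> 0" using LIMSEQ_subseq_LIMSEQ[OF xbx r3] by (simp add: t_def comp_def)
  have XBt: "(\<lambda>k. XB (t k)) \<longlonglongrightarrow> p"
  proof -
    have "(\<lambda>k. (XB (t k) - x (t k)) + x (t k)) \<longlonglongrightarrow> 0 + p" by (intro tendsto_add dt xt)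
    thus ?thesis by simp
  qed
  have r3N: "k \<ge> N \<Longrightarrow> r3 k \<ge> N" for k using seq_suble[OF r3, of k] by simp
  have eqk: "\<xi> (t k) + QQ (t k) *v (XB (t k) - x (t k)) + VB (t k) + V (t k) *v LB (r3 k)
              + (LL (t k) \<bullet> LB (r3 k)) *\<^sub>R (XB (t k) - x (t k)) = 0" if k: "k \<ge> N" for k
  proof -
    have "gradH (uu (s1 (r3 k))) (XB (s1 (r3 k))) (LB (r3 k)) = NV (s1 (r3 k))"
      using LB[OF r3N[OF k]] by (simp add: Lambda_set_def)
    thus ?thesis by (simp add: gradH_uu NV_def t_def algebra_simps)
  qed
  have lim_eq: "(\<lambda>k. \<xi> (t k) + QQ (t k) *v (XB (t k) - x (t k)) + VB (t k) + V (t k) *v LB (r3 k)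
              + (LL (t k) \<bullet> LB (r3 k)) *\<^sub>R (XB (t k) - x (t k)))
        \<longlonglongrightarrow> \<xi>s + Qs *v 0 + vs + Vs *v ls + (Ls \<bullet> ls) *\<^sub>R 0"
    by (intro tendsto_add Mv_tendsto tendsto_scaleR tendsto_inner \<xi>t Qt dt VBl Vt LBl Lt)
  have "eventually (\<lambda>k. \<xi> (t k) + QQ (t k) *v (XB (t k) - x (t k)) + VB (t k) + V (t k) *v LB (r3 k)
              + (LL (t k) \<bullet> LB (r3 k)) *\<^sub>R (XB (t k) - x (t k)) = 0) sequentially"
    using eqk unfolding eventually_sequentially by blast
  hence "(\<lambda>k. \<xi> (t k) + QQ (t k) *v (XB (t k) - x (t k)) + VB (t k) + V (t k) *v LB (r3 k)
              + (LL (t k) \<bullet> LB (r3 k)) *\<^sub>R (XB (t k) - x (t k))) \<longlonglongrightarrow> 0"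
    by (rule tendsto_eventually)
  hence EQ: "\<xi>s + vs + Vs *v ls = 0" using LIMSEQ_unique[OF lim_eq] by simp
  have g0t: "(\<lambda>k. g0 (x (t k))) \<longlonglongrightarrow> g0 p" using isCont_tendsto_compose[OF g0c xt] .
  have xi_mem: "\<xi>s \<in> limiting_subdiff g0 p"
    by (rule limiting_closed[OF xt g0t _ \<xi>t]) (use xi_sub in blast)
  have col_mem: "column i Vs \<in> limiting_subdiff (\<lambda>w. g w $ i) p" for i
  proof -
    have gt: "(\<lambda>k. g (x (t k)) $ i) \<longlonglongrightarrow> g p $ i" using isCont_tendsto_compose[OF gic xt] .
    show ?thesis
      by (rule limiting_closed[OF xt gt _ column_tendsto[OF Vt]]) (use V_sub in \<open>auto simp: subdiff_vec_def\<close>)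
  qed
  have v_mem: "vs \<in> limiting_subdiff \<phi> p"
  proof (rule convex_sub_limiting)
    fix yy
    have l1: "(\<lambda>k. \<phi> (XB (t k)) + VB (t k) \<bullet> (yy - XB (t k))) \<longlonglongrightarrow> \<phi> p + vs \<bullet> (yy - p)"
      by (intro tendsto_intros isCont_tendsto_compose[OF phic XBt] VBl XBt)
    have "eventually (\<lambda>k. \<phi> (XB (t k)) + VB (t k) \<bullet> (yy - XB (t k)) \<le> \<phi> yy) sequentially"
      using VB(1) by simp
    thus "\<phi> p + vs \<bullet> (yy - p) \<le> \<phi> yy"
      using tendsto_le[OF trivial_limit_sequentially tendsto_const l1] by blast
  qed
  have Gt: "(\<lambda>k. Gfun g (XB (t k)) (x (t k)) (V (t k)) (LL (t k))) \<longlonglongrightarrow> g p"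
  proof -
    have gt: "(\<lambda>k. g (x (t k))) \<longlonglongrightarrow> g p" using isCont_tendsto_compose[OF g_cont xt] .
    have "(\<lambda>k. g (x (t k)) + transpose (V (t k)) *v (XB (t k) - x (t k)) + ((norm (XB (t k) - x (t k)))\<^sup>2 / 2) *\<^sub>R LL (t k))
          \<longlonglongrightarrow> g p + transpose Vs *v 0 + ((norm (0::real^'n))\<^sup>2 / 2) *\<^sub>R Ls"
      by (intro tendsto_intros Mv_tendsto transpose_tendsto gt Vt dt Lt) simp_all
    thus ?thesis by (simp add: Gfun_def)
  qed
  have ls_mem: "ls \<in> normal_cone nonpos_orthant (g p)"
  proof (rule normal_orth_I)
    show "g p \<in> nonpos_orthant" using pF by (simp add: feasible_def)
    show "\<forall>i. 0 \<le> ls $ i \<and> ls $ i * g p $ i = 0"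
    proof
      fix i
      have D: "0 \<le> LB (r3 k) $ i \<and> LB (r3 k) $ i * Gfun g (XB (t k)) (x (t k)) (V (t k)) (LL (t k)) $ i = 0"
        if k: "k \<ge> N" for k
      proof -
        have "LB (r3 k) \<in> normal_cone nonpos_orthant (Hfun g (uu (s1 (r3 k))) (XB (s1 (r3 k))))"
          using LB[OF r3N[OF k]] by (simp add: Lambda_set_def)
        hence "LB (r3 k) \<in> normal_cone nonpos_orthant (Gfun g (XB (t k)) (x (t k)) (V (t k)) (LL (t k)))"
          by (simp add: Hfun_uu t_def)
        thus ?thesis using normal_orth_D by blast
      qed
      have li: "(\<lambda>k. LB (r3 k) $ i) \<longlonglongrightarrow> ls $ i" by (intro tendsto_vec_nth LBl)
      have "eventually (\<lambda>k. 0 \<le> LB (r3 k) $ i) sequentially" using D unfolding eventually_sequentially by blast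
      hence "0 \<le> ls $ i" using tendsto_le[OF trivial_limit_sequentially li tendsto_const] by blast
      moreover have "ls $ i * g p $ i = 0"
      proof -
        have l2: "(\<lambda>k. LB (r3 k) $ i * Gfun g (XB (t k)) (x (t k)) (V (t k)) (LL (t k)) $ i) \<longlonglongrightarrow> ls $ i * g p $ i"
          by (intro tendsto_mult li tendsto_vec_nth Gt)
        have "eventually (\<lambda>k. LB (r3 k) $ i * Gfun g (XB (t k)) (x (t k)) (V (t k)) (LL (t k)) $ i = 0) sequentially"
          using D unfolding eventually_sequentially by blast
        hence "(\<lambda>k. LB (r3 k) $ i * Gfun g (XB (t k)) (x (t k)) (V (t k)) (LL (t k)) $ i) \<longlonglongrightarrow> 0"
          by (rule tendsto_eventually)
        thus ?thesis using LIMSEQ_unique[OF l2] by simp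
      qed
      ultimately show "0 \<le> ls $ i \<and> ls $ i * g p $ i = 0" by blast
    qed
  qed
  have "\<xi>s + vs + (\<Sum>i\<in>UNIV. ls $ i *\<^sub>R column i Vs) = 0" using EQ by (simp add: Mv_sum)
  hence "\<exists>w. (\<forall>i. w i \<in> limiting_subdiff (\<lambda>z. g z $ i) p) \<and> \<xi>s + vs + (\<Sum>i\<in>UNIV. ls $ i *\<^sub>R w i) = 0"
    using col_mem by (intro exI[of _ "\<lambda>i. column i Vs"]) auto
  thus ?thesis unfolding stationary_def using pF xi_mem v_mem ls_mem by blast
qed

theorem main:
  "\<exists>w. (\<lambda>k. Fobj g0 g \<phi> (x k)) \<longlonglongrightarrow> w \<and>
       (\<forall>p. cluster_point x p \<longrightarrow> stationary g0 g \<phi> p \<and> Fobj g0 g \<phi> p = w)"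
proof -
  obtain c where c: "fx \<longlonglongrightarrow> c" using fx_conv by blast
  have "(\<lambda>k. Fobj g0 g \<phi> (x k)) \<longlonglongrightarrow> ereal c" using tendsto_ereal[OF c] by (simp add: Fobj_x)
  moreover have "stationary g0 g \<phi> p \<and> Fobj g0 g \<phi> p = ereal c" if cp: "cluster_point x p" for p
  proof -
    obtain r where r: "strict_mono r" and xr: "(x \<circ> r) \<longlonglongrightarrow> p" using cp unfolding cluster_point_def by blast
    have pF: "p \<in> feasible g" using closed_sequentially[OF feas_closed _ xr] feas_x by simp
    have pO: "p \<in> Oset" using pF Gamma_sub by blast
    have g0c: "isCont g0 p" using g0_reg pO loclip_isCont by blast
    have phic: "isCont \<phi> p" using phi_cont continuous_on_eq_continuous_at[OF open_UNIV] by blast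
    have xr': "(\<lambda>k. x (r k)) \<longlonglongrightarrow> p" using xr by (simp add: comp_def)
    have "(\<lambda>k. g0 (x (r k)) + \<phi> (x (r k))) \<longlonglongrightarrow> g0 p + \<phi> p"
      by (intro tendsto_add isCont_tendsto_compose[OF g0c xr'] isCont_tendsto_compose[OF phic xr'])
    moreover have "(\<lambda>k. g0 (x (r k)) + \<phi> (x (r k))) \<longlonglongrightarrow> c"
      using LIMSEQ_subseq_LIMSEQ[OF c r] by (simp add: comp_def fx_def)
    ultimately have "c = g0 p + \<phi> p" using LIMSEQ_unique by blast
    hence "Fobj g0 g \<phi> p = ereal c" using pF by (simp add: Fobj_def feasible_def)
    thus ?thesis using stat[OF r xr] by blast
  qed
  ultimately show ?thesis by blast
qed

end

theorem theorem4p1: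
  fixes g0 :: "real^'n::finite \<Rightarrow> real"
    and g :: "real^'n \<Rightarrow> real^'m::finite"
    and \<phi> :: "real^'n \<Rightarrow> real"
    and Oset :: "(real^'n) set"
    and \<mu>min \<mu>max Lmin Lmax M \<beta>C \<beta>S \<alpha> \<tau> :: real
    and x \<xi> :: "nat \<Rightarrow> real^'n"
    and V :: "nat \<Rightarrow> real^'m^'n"
    and jk :: "nat \<Rightarrow> nat"
    and \<mu> :: "nat \<Rightarrow> nat \<Rightarrow> real"
    and Q :: "nat \<Rightarrow> nat \<Rightarrow> real^'n^'n"
    and L :: "nat \<Rightarrow> nat \<Rightarrow> real^'m"
    and y v xbar :: "nat \<Rightarrow> nat \<Rightarrow> real^'n"
    and lam :: "nat \<Rightarrow> nat \<Rightarrow> real^'m"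
  \<comment> \<open>Assumption 1\<close>
  assumes O_open: "open Oset" and O_convex: "convex Oset"
    and Gamma_sub: "feasible g \<subseteq> Oset" and Gamma_ne: "feasible g \<noteq> {}"
    and g0_reg: "\<forall>z\<in>Oset. loc_lipschitz_at g0 z \<and> upper_C2_at g0 z"
    and g_reg: "\<forall>i z. loc_lipschitz_at (\<lambda>w. g w $ i) z \<and> upper_C2_at (\<lambda>w. g w $ i) z"
    and phi_convex: "convex_on UNIV \<phi>"
    and F_bdd: "\<exists>c. \<forall>z\<in>feasible g. c \<le> g0 z + \<phi> z"
  \<comment> \<open>parameters of iMBA\<close>
    and params: "0 < \<mu>min" "\<mu>min \<le> \<mu>max" "0 < Lmin" "Lmin \<le> Lmax"
                "0 < M" "0 < \<beta>C" "0 < \<beta>S" "0 < \<alpha>" "1 < \<tau>"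
    and x0: "x 0 \<in> feasible g"
  \<comment> \<open>iteration k: choices\<close>
    and xi_sub: "\<forall>k. \<xi> k \<in> limiting_subdiff g0 (x k)"
    and V_sub: "\<forall>k. V k \<in> subdiff_vec g (x k)"
    and mu0: "\<forall>k. \<mu>min \<le> \<mu> k 0 \<and> \<mu> k 0 \<le> \<mu>max"
    and L0: "\<forall>k i. Lmin \<le> L k 0 $ i \<and> L k 0 $ i \<le> Lmax"
    and Q_bnd: "\<forall>k j. j \<le> jk k \<longrightarrow> transpose (Q k j) = Q k j \<and>
                  (\<forall>d. \<mu> k j * (norm d)\<^sup>2 \<le> d \<bullet> (Q k j *v d) \<and>
                       d \<bullet> (Q k j *v d) \<le> (\<mu> k j + M) * (norm d)\<^sup>2)"
  \<comment> \<open>exact subproblem solution \<open>xbar k j\<close>\<close>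
    and xbar_min: "\<forall>k j. j \<le> jk k \<longrightarrow>
                  Gfun g (xbar k j) (x k) (V k) (L k j) \<in> nonpos_orthant \<and>
                  (\<forall>z. Gfun g z (x k) (V k) (L k j) \<in> nonpos_orthant \<longrightarrow>
                       Fmodel g0 \<phi> (x k) (\<xi> k) (Q k j) (xbar k j) \<le> Fmodel g0 \<phi> (x k) (\<xi> k) (Q k j) z)"
  \<comment> \<open>inexactness criteria for \<open>y k j, v k j, lam k j\<close>\<close>
    and inexact: "\<forall>k j. j \<le> jk k \<longrightarrow>
                  Fmodel g0 \<phi> (x k) (\<xi> k) (Q k j) (y k j) \<le> Fmodel g0 \<phi> (x k) (\<xi> k) (Q k j) (x k) \<and>
                  v k j \<in> limiting_subdiff \<phi> (y k j) \<and>
                  (\<forall>i. 0 \<le> lam k j $ i) \<and>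
                  max 0 (- (lam k j \<bullet> Gfun g (y k j) (x k) (V k) (L k j))) +
                    infnorm (\<chi> i. max 0 (Gfun g (y k j) (x k) (V k) (L k j) $ i))
                    \<le> \<beta>C / 2 * (norm (y k j - x k))\<^sup>2 \<and>
                  norm (\<xi> k + Q k j *v (y k j - x k) + v k j + V k *v lam k j
                        + (L k j \<bullet> lam k j) *\<^sub>R (y k j - x k))
                    \<le> \<beta>S * norm (y k j - x k)"
  \<comment> \<open>acceptance test: fails before \<open>jk k\<close>, holds at \<open>jk k\<close>\<close>
    and reject: "\<forall>k j. j < jk k \<longrightarrow> \<not> (g (y k j) \<in> nonpos_orthant \<and>
                  Fobj g0 g \<phi> (y k j) \<le> Fobj g0 g \<phi> (x k) - ereal (\<alpha> / 2 * (norm (y k j - x k))\<^sup>2))"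
    and accept: "\<forall>k. g (y k (jk k)) \<in> nonpos_orthant \<and>
                  Fobj g0 g \<phi> (y k (jk k)) \<le> Fobj g0 g \<phi> (x k) - ereal (\<alpha> / 2 * (norm (y k (jk k) - x k))\<^sup>2)"
    and update: "\<forall>k j. j < jk k \<longrightarrow>
                  (g (y k j) \<notin> nonpos_orthant \<longrightarrow> L k (Suc j) = \<tau> *\<^sub>R L k j \<and> \<mu> k (Suc j) = \<mu> k j) \<and>
                  (g (y k j) \<in> nonpos_orthant \<longrightarrow> L k (Suc j) = L k j \<and> \<mu> k (Suc j) = \<tau> * \<mu> k j)"
    and x_next: "\<forall>k. x (Suc k) = y k (jk k)"
  \<comment> \<open>Assumption 2\<close>
    and A2: "\<forall>k j. j \<le> jk k \<longrightarrow>
                  metric_subregular (\<lambda>z. {Gfun g z (x k) (V k) (L k j) - w | w. w \<in> nonpos_orthant})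
                    (xbar k j) 0"
  \<comment> \<open>Assumption 3\<close>
    and A3: "bounded (range x)"
  \<comment> \<open>Assumption 4\<close>
    and A4: "\<forall>p. cluster_point (\<lambda>k. ((x k, L k (jk k), V k, \<xi> k, Q k (jk k)), xbar k (jk k))) p
                  \<longrightarrow> partial_BMP g (fst p) (snd p)"
  shows "\<exists>w. (\<lambda>k. Fobj g0 g \<phi> (x k)) \<longlonglongrightarrow> w \<and>
             (\<forall>p. cluster_point x p \<longrightarrow> stationary g0 g \<phi> p \<and> Fobj g0 g \<phi> p = w)"
proof -
  interpret imba g0 g \<phi> Oset \<mu>min \<mu>max Lmin Lmax M \<beta>C \<beta>S \<alpha> \<tau> x \<xi> V jk \<mu> Q L y v xbar lam
    by (unfold_locales; fact assms)
  show ?thesis by (rule main)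
qed

end
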